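(* Let $(\mathbf X,\mathbf Y)=\{(X^n,Y^n)\}_{n\ge1}$ be a general correlated source. For any $\varepsilon\in[0,1)$, \[ R_{com}^\varepsilon(\mathbf X|\mathbf Y)=\lim_{\delta\downarrow0}\limsup_{n\to\infty}\frac1n H^{\varepsilon+\delta}(X^n|Y^n)=\lim_{\delta\downarrow0}\limsup_{n\to\infty}\frac1n \tilde H^{\varepsilon+\delta}(X^n|Y^n)=\lim_{\delta\downarrow0}\limsup_{n\to\infty}\frac1n \hat H^{\varepsilon+\delta}(X^n|Y^n). \]
   Context: A general correlated source $(\mathbf X,\mathbf Y)=\{(X^n,Y^n)\}_{n\ge1}$ is an arbitrary sequence of pairs of random variables, $(X^n,Y^n)$ taking values in $\mathcal X^n\times\mathcal Y^n$ where $\mathcal X,\mathcal Y$ are finite or countably infinite, with joint distribution $P_{X^nY^n}$; no stationarity, ergodicity, memorylessness or consistency across $n$ is assumed. All marginal probabilities are assumed positive so conditional distributions are defined everywhere. Logarithms are base 2. One-shot quantities: for a pair $(X,Y)$ on discrete $\mathcal X\times\mathcal Y$ with distribution $P_{XY}$ and a set $\mathcal A\subseteq\mathcal X\times\mathcal Y$ with $P_{XY}(\mathcal A)>0$, let $Q^{\mathcal A}_{XY}(x,y)=P_{XY}(x,y)\mathbf 1[(x,y)\in\mathcal A]/P_{XY}(\mathcal A)$, $Q^{\mathcal A}_Y$ its $Y$-marginal, and $H_{\mathcal A}(X|Y)=\sum_{x,y}Q^{\mathcal A}_{XY}(x,y)\log\frac{Q^{\mathcal A}_Y(y)}{Q^{\mathcal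 A}_{XY}(x,y)}$. Define $H^\varepsilon(X|Y)=\inf\{P_{XY}(\mathcal A)H_{\mathcal A}(X|Y):P_{XY}(\mathcal A)\ge1-\varepsilon\}$, $\tilde H^\varepsilon(X|Y)=\inf\{\sum_{(x,y)\in\mathcal A}P_{XY}(x,y)\log\frac1{P_{X|Y}(x|y)}:P_{XY}(\mathcal A)\ge1-\varepsilon\}$, and $\hat H^\varepsilon(X|Y)=\sum_{i=1}^{i^*}P_{XY}(x_i,y_i)\log\frac1{P_{X|Y}(x_i|y_i)}$, where the pairs of $\mathcal X\times\mathcal Y$ are enumerated as $(x_1,y_1),(x_2,y_2),\dots$ so that $P_{X|Y}(x_i|y_i)$ is nonincreasing in $i$, and $i^*$ is the smallest integer with $\sum_{i=1}^{i^*}P_{XY}(x_i,y_i)\ge1-\varepsilon$. These are applied with $(X,Y)=(X^n,Y^n)$. Coding with common side-information: a code of blocklength $n$ is a pair $(\varphi_n,\psi_n)$ with encoder $\varphi_n:\mathcal X^n\times\mathcal Y^n\to\{0,1\}^*$ such that for each $y^n$ the set of codewords $\{\varphi_n(x^n|y^n):x^n\in\mathcal X^n\}$ is prefix-free, and decoder $\psi_n:\{0,1\}^*\times\mathcal Y^n\to\mathcal X^n$. Its error probability is $\Pr\{\psi_n(\varphi_n(X^n|Y^n),Y^n)\ne X^n\}$ and $\ell_n(x^n|y^n)$ denotes the length of $\varphi_n(x^n|y^n)$. A rate $R$ is $\varepsilon$-achievable if there exist codes with $\limsup_n$ error probability $\le\varepsilon$ and $\limsup_n\frac1n\mathbb E[\ell_n(X^n|Y^n)]\le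 R$; $R^\varepsilon_{com}(\mathbf X|\mathbf Y)$ is the infimum of $\varepsilon$-achievable rates. *)

theory Defs
  imports "HOL-Probability.Probability" "HOL-Library.Sublist"
begin

definition general_source :: "(nat \<Rightarrow> ('a::countable list \<times> 'b::countable list) pmf) \<Rightarrow> bool" where
  "general_source P \<longleftrightarrow>
     (\<forall>n. set_pmf (P n) \<subseteq> {(x, y). length x = n \<and> length y = n}) \<and>
     (\<forall>n x. length x = n \<longrightarrow> pmf (map_pmf fst (P n)) x > 0) \<and>
     (\<forall>n y. length y = n \<longrightarrow> pmf (map_pmf snd (P n)) y > 0)"

definition condP :: "('a \<times> 'b) pmf \<Rightarrow> 'a \<times> 'b \<Rightarrow> real" where
  "condP P p = pmf P p / pmf (map_pmf snd P) (snd p)"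

definition H_A :: "('a \<times> 'b) pmf \<Rightarrow> ('a \<times> 'b) set \<Rightarrow> ennreal" where
  "H_A P A = (let Q = cond_pmf P A; QY = map_pmf snd Q in
     (\<Sum>\<^sub>\<infinity>p. ennreal (pmf Q p * log 2 (pmf QY (snd p) / pmf Q p))))"

definition H_eps :: "('a \<times> 'b) pmf \<Rightarrow> real \<Rightarrow> ennreal" where
  "H_eps P \<epsilon> = (INF A \<in> {A. measure_pmf.prob P A > 0 \<and> measure_pmf.prob P A \<ge> 1 - \<epsilon>}.
                    ennreal (measure_pmf.prob P A) * H_A P A)"

definition Htilde_eps :: "('a \<times> 'b) pmf \<Rightarrow> real \<Rightarrow> ennreal" where
  "Htilde_eps P \<epsilon> = (INF A \<in> {A. measure_pmf.prob P A \<ge> 1 - \<epsilon>}.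
                    (\<Sum>\<^sub>\<infinity>p\<in>A. ennreal (pmf P p * log 2 (1 / condP P p))))"

definition sorted_enum :: "('a \<times> 'b) pmf \<Rightarrow> (nat \<Rightarrow> 'a \<times> 'b) \<Rightarrow> bool" where
  "sorted_enum P e \<longleftrightarrow> (\<exists>N::enat.
      bij_betw e {i. enat i < N} (set_pmf P) \<and>
      (\<forall>i j. enat j < N \<longrightarrow> i \<le> j \<longrightarrow> condP P (e j) \<le> condP P (e i)))"

definition Hhat_eps :: "('a \<times> 'b) pmf \<Rightarrow> (nat \<Rightarrow> 'a \<times> 'b) \<Rightarrow> real \<Rightarrow> ennreal" where
  "Hhat_eps P e \<epsilon> =
     (let istar = (LEAST k. (\<Sum>i<k. pmf P (e i)) \<ge> 1 - \<epsilon>) in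
      ennreal (\<Sum>i<istar. pmf P (e i) * log 2 (1 / condP P (e i))))"

definition prefix_free :: "bool list set \<Rightarrow> bool" where
  "prefix_free C \<longleftrightarrow> (\<forall>c\<in>C. \<forall>c'\<in>C. prefix c c' \<longrightarrow> c = c')"

definition valid_code :: "nat \<Rightarrow> ('a list \<Rightarrow> 'b list \<Rightarrow> bool list) \<Rightarrow> bool" where
  "valid_code n \<phi> \<longleftrightarrow> (\<forall>y. length y = n \<longrightarrow> prefix_free {\<phi> x y | x. length x = n})"

definition err_prob :: "('a list \<times> 'b list) pmf \<Rightarrow> ('a list \<Rightarrow> 'b list \<Rightarrow> bool list)
    \<Rightarrow> (bool list \<Rightarrow> 'b list \<Rightarrow> 'a list) \<Rightarrow> real" where
  "err_prob P \<phi> \<psi> = measure_pmf.prob P {(x, y). \<psi> (\<phi> x y) y \<noteq> x}"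

definition exp_len :: "('a list \<times> 'b list) pmf \<Rightarrow> ('a list \<Rightarrow> 'b list \<Rightarrow> bool list) \<Rightarrow> ennreal" where
  "exp_len P \<phi> = (\<Sum>\<^sub>\<infinity>p. ennreal (pmf P p) * of_nat (length (\<phi> (fst p) (snd p))))"

definition achievable :: "(nat \<Rightarrow> ('a list \<times> 'b list) pmf) \<Rightarrow> real \<Rightarrow> ennreal \<Rightarrow> bool" where
  "achievable P \<epsilon> R \<longleftrightarrow> (\<exists>\<phi> \<psi>. (\<forall>n. valid_code n (\<phi> n)) \<and>
      limsup (\<lambda>n. ennreal (err_prob (P n) (\<phi> n) (\<psi> n))) \<le> ennreal \<epsilon> \<and>
      limsup (\<lambda>n. ennreal (1 / real n) * exp_len (P n) (\<phi> n)) \<le> R)"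

definition R_com :: "(nat \<Rightarrow> ('a list \<times> 'b list) pmf) \<Rightarrow> real \<Rightarrow> ennreal" where
  "R_com P \<epsilon> = Inf {R. achievable P \<epsilon> R}"

end

theory Submission
  imports Defs "HOL-Real_Asymp.Real_Asymp"
begin

definition wt :: "('a \<times> 'b) pmf \<Rightarrow> 'a \<times> 'b \<Rightarrow> real" where
  "wt P p = log 2 (1 / condP P p)"

lemma infsum_pmf_ennreal:
  "(\<Sum>\<^sub>\<infinity>p\<in>A. ennreal (pmf P p)) = ennreal (measure_pmf.prob P A)"
proof -
  have s: "pmf P summable_on A"
    using pmf_abs_summable[of P A] abs_summable_equivalent abs_summable_summable by blast
  have "ennreal (infsum (pmf P) A) = infsum (ennreal \<circ> pmf P) A"
    by (simp add: infsum_comm_additive_general s)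
  moreover have "measure_pmf.prob P A = infsum (pmf P) A"
    using measure_pmf_conv_infsetsum infsetsum_infsum pmf_abs_summable by metis
  ultimately show ?thesis by (simp add: comp_def)
qed


lemma pmf_le_marg: "pmf P p \<le> pmf (map_pmf snd P) (snd p)"
proof -
  have "pmf P p = measure_pmf.prob P {p}" by (simp add: measure_pmf_single)
  also have "\<dots> \<le> measure_pmf.prob P (snd -` {snd p})"
    by (intro measure_pmf.finite_measure_mono) auto
  also have "\<dots> = pmf (map_pmf snd P) (snd p)" by (simp add: pmf_map)
  finally show ?thesis .
qed

lemma condP_pos: assumes "p \<in> set_pmf P" shows "0 < condP P p" "condP P p \<le> 1"
proof -
  have a: "0 < pmf P p" using assms by (simp add: pmf_positive)
  have b: "pmf P p \<le> pmf (map_pmf snd P) (snd p)" by (rule pmf_le_marg)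
  show "0 < condP P p" using a b unfolding condP_def by simp
  show "condP P p \<le> 1" using a b unfolding condP_def by simp
qed

lemma condP_ge_pmf: "pmf P p \<le> condP P p"
proof (cases "pmf P p = 0")
  case True then show ?thesis unfolding condP_def by simp
next
  case False
  then have a: "0 < pmf P p" using pmf_nonneg[of P p] by linarith
  have b: "pmf P p \<le> pmf (map_pmf snd P) (snd p)" by (rule pmf_le_marg)
  have c: "pmf (map_pmf snd P) (snd p) \<le> 1" by (rule pmf_le_1)
  have m0: "0 < pmf (map_pmf snd P) (snd p)" using a b by linarith
  have "pmf P p * pmf (map_pmf snd P) (snd p) \<le> pmf P p"
    using a c by (simp add: mult_left_le)
  then show ?thesis unfolding condP_def using m0 by (simp add: le_divide_eq)
qed

lemma wt_nonneg: "p \<in> set_pmf P \<Longrightarrow> 0 \<le> wt P p"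
  unfolding wt_def using condP_pos[of p P] by simp

lemma term_le2: "pmf P p * wt P p \<le> 2"
proof (cases "p \<in> set_pmf P")
  case False then show ?thesis by (simp add: set_pmf_eq)
next
  case True
  define q where "q = pmf P p"
  have q0: "0 < q" using True by (simp add: q_def pmf_positive)
  have q1: "q \<le> 1" by (simp add: q_def pmf_le_1)
  have c: "q \<le> condP P p" using condP_ge_pmf q_def by metis
  have "wt P p \<le> log 2 (1/q)" unfolding wt_def using q0 c by (simp add: frac_le)
  also have "\<dots> = ln (1/q) / ln 2" by (simp add: log_def)
  also have "\<dots> \<le> (1/q - 1) / ln 2"
    using ln_le_minus_one[of "1/q"] q0 by (simp add: divide_right_mono)
  finally have "q * wt P p \<le> q * ((1/q - 1) / ln 2)" using q0 by (metis less_eq_real_def mult_left_mono)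
  also have "\<dots> = (1 - q) / ln 2" using q0 by (simp add: field_simps)
  also have "\<dots> \<le> 1 / ln 2" using q0 by (simp add: divide_right_mono)
  also have "\<dots> \<le> 2" using ln2_ge_two_thirds by (simp add: field_simps)
  finally show ?thesis by (simp add: q_def)
qed

lemma ennr_summable[simp]: "(f::_ \<Rightarrow> ennreal) summable_on S"
  by (simp add: nonneg_summable_on_complete)

lemma ennreal_infsum_cmult:
  fixes f :: "'a \<Rightarrow> ennreal"
  shows "(\<Sum>\<^sub>\<infinity>x\<in>A. c * f x) = c * (\<Sum>\<^sub>\<infinity>x\<in>A. f x)"
proof -
  have "(\<Sum>\<^sub>\<infinity>x\<in>A. c * f x) = (SUP F\<in>{F. finite F \<and> F\<subseteq>A}. sum (\<lambda>x. c * f x) F)"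
    by (rule nonneg_infsum_complete) simp
  also have "\<dots> = (SUP F\<in>{F. finite F \<and> F\<subseteq>A}. c * sum f F)"
    by (simp add: sum_distrib_left)
  also have "\<dots> = c * (SUP F\<in>{F. finite F \<and> F\<subseteq>A}. sum f F)"
    by (simp add: SUP_mult_left_ennreal)
  also have "\<dots> = c * (\<Sum>\<^sub>\<infinity>x\<in>A. f x)"
    by (subst nonneg_infsum_complete) simp_all
  finally show ?thesis .
qed

lemma measure_cond_pmf:
  assumes "measure_pmf.prob P A > 0"
  shows "measure_pmf.prob (cond_pmf P A) B = measure_pmf.prob P (A \<inter> B) / measure_pmf.prob P A"
proof -
  have ne: "set_pmf P \<inter> A \<noteq> {}"
  proof
    assume "set_pmf P \<inter> A = {}"
    then have "measure_pmf.prob P A = 0" by (simp add: measure_pmf_zero_iff)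
    with assms show False by simp
  qed
  have "emeasure (measure_pmf P) A \<noteq> 0" using assms
    by (simp add: measure_pmf.emeasure_eq_measure)
  then show ?thesis
    using cond_pmf.rep_eq[OF ne] measure_uniform_measure by (simp add: measure_pmf.emeasure_eq_measure)
qed

lemma pmf_cond':
  assumes "measure_pmf.prob P A > 0"
  shows "pmf (cond_pmf P A) p = (if p \<in> A then pmf P p / measure_pmf.prob P A else 0)"
proof -
  have ne: "set_pmf P \<inter> A \<noteq> {}"
  proof
    assume "set_pmf P \<inter> A = {}"
    then have "measure_pmf.prob P A = 0" by (simp add: measure_pmf_zero_iff)
    with assms show False by simp
  qed
  show ?thesis using pmf_cond[OF ne] by simp
qed

lemma HA_term:
  assumes m: "measure_pmf.prob P A > 0" and pA: "p \<in> A" and pP: "0 < pmf P p"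
  shows "measure_pmf.prob P A * (pmf (cond_pmf P A) p *
           log 2 (pmf (map_pmf snd (cond_pmf P A)) (snd p) / pmf (cond_pmf P A) p))
       = pmf P p * log 2 (measure_pmf.prob P (A \<inter> snd -` {snd p}) / pmf P p)"
proof -
  let ?m = "measure_pmf.prob P A"
  have q: "pmf (cond_pmf P A) p = pmf P p / ?m" using pmf_cond'[OF m] pA by simp
  have qy: "pmf (map_pmf snd (cond_pmf P A)) (snd p) = measure_pmf.prob P (A \<inter> snd -` {snd p}) / ?m"
    by (simp add: pmf_map measure_cond_pmf[OF m])
  have "measure_pmf.prob P (A \<inter> snd -` {snd p}) / ?m / (pmf P p / ?m)
        = measure_pmf.prob P (A \<inter> snd -` {snd p}) / pmf P p" using m pP by simp
  then show ?thesis unfolding q qy using m by simp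
qed

lemma ratio_ge1:
  assumes pA: "p \<in> A" and pP: "0 < pmf P p"
  shows "1 \<le> measure_pmf.prob P (A \<inter> snd -` {snd p}) / pmf P p"
proof -
  have "pmf P p = measure_pmf.prob P {p}" by (simp add: measure_pmf_single)
  also have "\<dots> \<le> measure_pmf.prob P (A \<inter> snd -` {snd p})"
    using pA by (intro measure_pmf.finite_measure_mono) auto
  finally show ?thesis using pP by simp
qed

lemma ratio_le:
  assumes pP: "0 < pmf P p"
  shows "measure_pmf.prob P (A \<inter> snd -` {snd p}) / pmf P p \<le> 1 / condP P p"
proof -
  have "measure_pmf.prob P (A \<inter> snd -` {snd p}) \<le> measure_pmf.prob P (snd -` {snd p})"
    by (intro measure_pmf.finite_measure_mono) auto
  also have "\<dots> = pmf (map_pmf snd P) (snd p)" by (simp add: pmf_map)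
  finally show ?thesis unfolding condP_def using pP by (simp add: divide_right_mono)
qed

lemma HA_le_Ht:
  assumes m: "measure_pmf.prob P A > 0"
  shows "ennreal (measure_pmf.prob P A) * H_A P A
           \<le> (\<Sum>\<^sub>\<infinity>p\<in>A. ennreal (pmf P p * log 2 (1 / condP P p)))"
proof -
  let ?m = "measure_pmf.prob P A"
  let ?Q = "cond_pmf P A"
  define g where "g p = ennreal (pmf ?Q p * log 2 (pmf (map_pmf snd ?Q) (snd p) / pmf ?Q p))" for p
  have "ennreal ?m * H_A P A = ennreal ?m * (\<Sum>\<^sub>\<infinity>p. g p)"
    unfolding H_A_def g_def Let_def by simp
  also have "\<dots> = (\<Sum>\<^sub>\<infinity>p. ennreal ?m * g p)"
    by (rule ennreal_infsum_cmult[symmetric])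
  also have "\<dots> \<le> (\<Sum>\<^sub>\<infinity>p\<in>A. ennreal (pmf P p * log 2 (1 / condP P p)))"
  proof (rule infsum_mono_neutral)
    fix p assume "p \<in> UNIV \<inter> A"
    then have pA: "p \<in> A" by simp
    show "ennreal ?m * g p \<le> ennreal (pmf P p * log 2 (1 / condP P p))"
    proof (cases "pmf P p = 0")
      case True
      then show ?thesis using pmf_cond'[OF m, of p] by (simp add: g_def)
    next
      case False
      then have pP: "0 < pmf P p" using pmf_nonneg[of P p] by linarith
      let ?r = "measure_pmf.prob P (A \<inter> snd -` {snd p}) / pmf P p"
      have r1: "1 \<le> ?r" by (rule ratio_ge1[OF pA pP])
      have "ennreal ?m * g p = ennreal (?m * (pmf ?Q p * log 2 (pmf (map_pmf snd ?Q) (snd p) / pmf ?Q p)))"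
        unfolding g_def by (simp add: ennreal_mult')
      also have "\<dots> = ennreal (pmf P p * log 2 ?r)" using HA_term[OF m pA pP] by simp
      also have "\<dots> \<le> ennreal (pmf P p * log 2 (1 / condP P p))"
      proof -
        have "log 2 ?r \<le> log 2 (1 / condP P p)"
          using ratio_le[OF pP, of A] r1 condP_pos(1)[of p P] pP by (subst log_le_cancel_iff) (auto simp: set_pmf_iff)
        then show ?thesis using pP by (intro ennreal_leI mult_left_mono) auto
      qed
      finally show ?thesis .
    qed
  next
    fix p assume "p \<in> UNIV - A"
    then show "ennreal ?m * g p \<le> 0" using pmf_cond'[OF m, of p] by (simp add: g_def)
  qed (simp_all add: ennr_summable)
  finally show ?thesis .
qed

lemma H_le_Ht: assumes "\<gamma> < 1" shows "H_eps P \<gamma> \<le> Htilde_eps P \<gamma>"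
  unfolding H_eps_def Htilde_eps_def
proof (rule INF_mono)
  fix A assume A: "A \<in> {A. 1 - \<gamma> \<le> measure_pmf.prob P A}"
  then have "measure_pmf.prob P A > 0" using assms by auto
  with A show "\<exists>A'\<in>{A. 0 < measure_pmf.prob P A \<and> 1 - \<gamma> \<le> measure_pmf.prob P A}.
          ennreal (measure_pmf.prob P A') * H_A P A'
          \<le> (\<Sum>\<^sub>\<infinity>p\<in>A. ennreal (pmf P p * log 2 (1 / condP P p)))"
    using HA_le_Ht by blast
qed

lemma H_antimono: assumes "\<gamma> \<le> \<gamma>'" shows "H_eps P \<gamma>' \<le> H_eps P \<gamma>"
  unfolding H_eps_def by (rule INF_superset_mono) (use assms in auto)

lemma sorted_enum_exists_k:
  assumes N: "bij_betw e {i. enat i < N} (set_pmf P)" and g: "0 < \<gamma>"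
  shows "\<exists>k. enat k \<le> N \<and> 1 - \<gamma> \<le> (\<Sum>i<k. pmf P (e i))"
proof (cases N)
  case (enat M)
  have "{i. enat i < N} = {..<M}" using enat by auto
  then have b: "bij_betw e {..<M} (set_pmf P)" using N by simp
  then have fin: "finite (set_pmf P)" using bij_betw_finite by blast
  have "(\<Sum>i<M. pmf P (e i)) = (\<Sum>p\<in>set_pmf P. pmf P p)"
    using sum.reindex_bij_betw[OF b, of "pmf P"] by simp
  also have "\<dots> = 1" using sum_pmf_eq_1[OF fin] by simp
  finally show ?thesis using enat g by (intro exI[of _ M]) auto
next
  case infinity
  then have b: "bij_betw e UNIV (set_pmf P)" using N by simp
  have s: "pmf P summable_on (set_pmf P)"
    using pmf_abs_summable[of P "set_pmf P"] abs_summable_equivalent abs_summable_summable by blast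
  have "infsum (pmf P) (set_pmf P) = measure_pmf.prob P (set_pmf P)"
    using measure_pmf_conv_infsetsum infsetsum_infsum pmf_abs_summable by metis
  also have "\<dots> = 1" by (simp add: measure_pmf.prob_eq_1 AE_measure_pmf)
  finally have "(pmf P has_sum 1) (set_pmf P)" using s has_sum_iff by blast
  then have "((\<lambda>i. pmf P (e i)) has_sum 1) UNIV"
    using has_sum_reindex_bij_betw[OF b] by blast
  then have "(\<lambda>i. pmf P (e i)) sums 1" by (rule has_sum_imp_sums)
  then have "(\<lambda>k. \<Sum>i<k. pmf P (e i)) \<longlonglongrightarrow> 1" by (simp add: sums_def)
  then have "eventually (\<lambda>k. 1 - \<gamma> < (\<Sum>i<k. pmf P (e i))) sequentially"
    using g by (intro order_tendstoD) auto
  then obtain k where "1 - \<gamma> < (\<Sum>i<k. pmf P (e i))" by (meson eventually_sequentially le_refl)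
  then show ?thesis using infinity by (intro exI[of _ k]) auto
qed

definition Fterm :: "('a \<times> 'b) pmf \<Rightarrow> 'a \<times> 'b \<Rightarrow> real" where
  "Fterm P p = pmf P p * log 2 (1 / condP P p)"

lemma Fterm_nonneg: "0 \<le> Fterm P p"
proof (cases "p \<in> set_pmf P")
  case True then show ?thesis using wt_nonneg[OF True] unfolding Fterm_def wt_def by simp
next
  case False then show ?thesis by (simp add: Fterm_def set_pmf_eq)
qed

lemma Fterm_le2: "Fterm P p \<le> 2"
  using term_le2[of P p] unfolding Fterm_def wt_def .

lemma sum_Fterm_ennreal:
  assumes "finite B" shows "ennreal (sum (Fterm P) B) = (\<Sum>\<^sub>\<infinity>p\<in>B. ennreal (Fterm P p))"
  using assms by (simp add: sum_ennreal Fterm_nonneg)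

context
  fixes P :: "('a \<times> 'b) pmf" and e :: "nat \<Rightarrow> 'a \<times> 'b" and \<gamma> :: real and N :: enat
  assumes bij: "bij_betw e {i. enat i < N} (set_pmf P)"
    and srt: "\<forall>i j. enat j < N \<longrightarrow> i \<le> j \<longrightarrow> condP P (e j) \<le> condP P (e i)"
    and g: "0 < \<gamma>"
begin

definition istar where "istar = (LEAST k. 1 - \<gamma> \<le> (\<Sum>i<k. pmf P (e i)))"

lemma istar_props: "1 - \<gamma> \<le> (\<Sum>i<istar. pmf P (e i))" "enat istar \<le> N"
proof -
  obtain k where k: "enat k \<le> N" "1 - \<gamma> \<le> (\<Sum>i<k. pmf P (e i))"
    using sorted_enum_exists_k[OF bij g] by blast
  show "1 - \<gamma> \<le> (\<Sum>i<istar. pmf P (e i))" unfolding istar_def by (rule LeastI[of _ k]) (rule k(2))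
  have "istar \<le> k" unfolding istar_def by (rule Least_le) (rule k(2))
  then show "enat istar \<le> N" using k(1) by (meson enat_ord_simps(1) order_trans)
qed

lemma inj_e: "k \<le> istar \<Longrightarrow> inj_on e {..<k}" and e_in: "i < istar \<Longrightarrow> e i \<in> set_pmf P"
proof -
  have sub: "{..<istar} \<subseteq> {i. enat i < N}"
    using istar_props(2) by auto (meson enat_ord_simps(2) order_less_le_trans)
  show "k \<le> istar \<Longrightarrow> inj_on e {..<k}"
    using bij_betw_imp_inj_on[OF bij] sub by (meson inj_on_subset lessThan_subset_iff order_trans)
  show "i < istar \<Longrightarrow> e i \<in> set_pmf P"
    using bij_betwE[OF bij] sub by auto
qed

lemma Hhat_eq: "Hhat_eps P e \<gamma> = ennreal (\<Sum>i<istar. Fterm P (e i))"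
  unfolding Hhat_eps_def istar_def Fterm_def Let_def by simp

lemma Ht_le_Hhat: "Htilde_eps P \<gamma> \<le> Hhat_eps P e \<gamma>"
proof -
  let ?S = "e ` {..<istar}"
  have inj: "inj_on e {..<istar}" using inj_e by simp
  have "measure_pmf.prob P ?S = (\<Sum>i<istar. pmf P (e i))"
    using inj by (simp add: measure_measure_pmf_finite sum.reindex)
  then have S: "?S \<in> {A. 1 - \<gamma> \<le> measure_pmf.prob P A}" using istar_props(1) by simp
  have "Htilde_eps P \<gamma> \<le> (\<Sum>\<^sub>\<infinity>p\<in>?S. ennreal (Fterm P p))"
    unfolding Htilde_eps_def Fterm_def using S by (rule INF_lower)
  also have "\<dots> = ennreal (sum (Fterm P) ?S)" by (simp add: sum_Fterm_ennreal)
  also have "\<dots> = ennreal (\<Sum>i<istar. Fterm P (e i))" using inj by (simp add: sum.reindex)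
  finally show ?thesis using Hhat_eq by simp
qed


lemma Hhat_le:
  assumes A: "1 - \<gamma> \<le> measure_pmf.prob P A"
  shows "Hhat_eps P e \<gamma> \<le> (\<Sum>\<^sub>\<infinity>p\<in>A. ennreal (Fterm P p)) + 2"
proof (cases istar)
  case 0
  then show ?thesis using Hhat_eq by simp
next
  case (Suc j)
  define T where "T = e ` {..<j}"
  define t where "t = log 2 (1 / condP P (e j))"
  have jN: "enat j < N" using istar_props(2) Suc by (simp add: Suc_ile_eq)
  have ej: "e j \<in> set_pmf P" using e_in Suc by simp
  have injj: "inj_on e {..<j}" using inj_e Suc by simp
  have finT: "finite T" unfolding T_def by simp
  have sj: "(\<Sum>i<j. pmf P (e i)) < 1 - \<gamma>"
    using not_less_Least[of j "\<lambda>k. 1 - \<gamma> \<le> (\<Sum>i<k. pmf P (e i))"] Suc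
    unfolding istar_def by auto
  have PT: "measure_pmf.prob P T = (\<Sum>i<j. pmf P (e i))"
    using injj by (simp add: T_def measure_measure_pmf_finite sum.reindex)
  have t0: "0 \<le> t" unfolding t_def using condP_pos[OF ej] by simp
  have cej: "0 < condP P (e j)" using condP_pos[OF ej] by simp
  have a: "Fterm P p \<le> pmf P p * t" if pT: "p \<in> T" for p
  proof -
    obtain i where i: "i < j" "p = e i" using pT T_def by auto
    have "condP P (e j) \<le> condP P (e i)" using srt jN i by auto
    then have "log 2 (1 / condP P p) \<le> t"
      unfolding t_def using i cej by (simp add: frac_le)
    then show ?thesis unfolding Fterm_def by (simp add: mult_left_mono)
  qed
  have b: "t \<le> log 2 (1 / condP P p)" if pT: "p \<in> set_pmf P" "p \<notin> T" for p
  proof -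
    obtain i where i: "enat i < N" "p = e i" using pT bij_betw_imp_surj_on[OF bij] by auto
    have "j \<le> i" using i pT(2) T_def by (meson imageI leI lessThan_iff)
    then have "condP P (e i) \<le> condP P (e j)" using srt i by auto
    moreover have "0 < condP P (e i)" using condP_pos(1)[of "e i" P] pT i by simp
    ultimately show ?thesis unfolding t_def using i by (simp add: frac_le)
  qed
  have sumT: "sum (Fterm P) T \<le> sum (Fterm P) (T \<inter> A) + t * measure_pmf.prob P (A - T)"
  proof -
    have "sum (Fterm P) T = sum (Fterm P) (T \<inter> A) + sum (Fterm P) (T - A)"
      using finT by (metis Diff_Int2 inf.idem sum.Int_Diff)
    also have "sum (Fterm P) (T - A) \<le> sum (\<lambda>p. pmf P p * t) (T - A)"
      using a by (intro sum_mono) auto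
    also have "\<dots> = t * measure_pmf.prob P (T - A)"
      using finT by (simp add: measure_measure_pmf_finite sum_distrib_left mult.commute)
    also have "\<dots> \<le> t * measure_pmf.prob P (A - T)"
    proof (rule mult_left_mono[OF _ t0])
      have "measure_pmf.prob P (T - A) = measure_pmf.prob P T - measure_pmf.prob P (T \<inter> A)"
        by (simp add: measure_pmf.finite_measure_Diff')
      also have "\<dots> \<le> measure_pmf.prob P A - measure_pmf.prob P (A \<inter> T)"
        using PT sj A by (simp add: Int_commute)
      also have "\<dots> = measure_pmf.prob P (A - T)"
        by (simp add: measure_pmf.finite_measure_Diff')
      finally show "measure_pmf.prob P (T - A) \<le> measure_pmf.prob P (A - T)" .
    qed
    finally show ?thesis by simp
  qed
  have rest: "ennreal (t * measure_pmf.prob P (A - T)) \<le> (\<Sum>\<^sub>\<infinity>p\<in>A - T. ennreal (Fterm P p))"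
  proof -
    have "ennreal (t * measure_pmf.prob P (A - T)) = ennreal t * (\<Sum>\<^sub>\<infinity>p\<in>A - T. ennreal (pmf P p))"
      using t0 by (simp add: infsum_pmf_ennreal ennreal_mult)
    also have "\<dots> = (\<Sum>\<^sub>\<infinity>p\<in>A - T. ennreal t * ennreal (pmf P p))"
      by (rule ennreal_infsum_cmult[symmetric])
    also have "\<dots> \<le> (\<Sum>\<^sub>\<infinity>p\<in>A - T. ennreal (Fterm P p))"
    proof (rule infsum_mono)
      fix p assume p: "p \<in> A - T"
      show "ennreal t * ennreal (pmf P p) \<le> ennreal (Fterm P p)"
      proof (cases "p \<in> set_pmf P")
        case True
        have "t \<le> log 2 (1 / condP P p)" using b True p by simp
        then have "t * pmf P p \<le> Fterm P p" unfolding Fterm_def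
          by (metis mult.commute mult_left_mono pmf_nonneg)
        then show ?thesis using t0 by (simp add: ennreal_mult[symmetric] ennreal_leI)
      next
        case False then show ?thesis by (simp add: set_pmf_eq)
      qed
    qed simp_all
    finally show ?thesis .
  qed
  have split: "(\<Sum>\<^sub>\<infinity>p\<in>A. ennreal (Fterm P p))
      = (\<Sum>\<^sub>\<infinity>p\<in>T \<inter> A. ennreal (Fterm P p)) + (\<Sum>\<^sub>\<infinity>p\<in>A - T. ennreal (Fterm P p))"
  proof -
    have "A = (T \<inter> A) \<union> (A - T)" by blast
    then show ?thesis by (metis (no_types, lifting) infsum_Un_disjoint ennr_summable Diff_disjoint inf_commute Int_Diff_disjoint)
  qed
  have "(\<Sum>i<istar. Fterm P (e i)) = sum (Fterm P) T + Fterm P (e j)"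
    using Suc injj by (simp add: T_def sum.reindex)
  then have "Hhat_eps P e \<gamma> = ennreal (sum (Fterm P) T) + ennreal (Fterm P (e j))"
    using Hhat_eq by (simp add: ennreal_plus sum_nonneg Fterm_nonneg)
  also have "\<dots> \<le> ennreal (sum (Fterm P) (T \<inter> A) + t * measure_pmf.prob P (A - T)) + 2"
  proof (rule add_mono)
    show "ennreal (Fterm P (e j)) \<le> 2"
    proof -
      have "ennreal (Fterm P (e j)) \<le> ennreal 2" by (rule ennreal_leI[OF Fterm_le2])
      then show ?thesis by simp
    qed
  qed (use sumT in \<open>rule ennreal_leI\<close>)
  also have "\<dots> = (\<Sum>\<^sub>\<infinity>p\<in>T \<inter> A. ennreal (Fterm P p)) + ennreal (t * measure_pmf.prob P (A - T)) + 2"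
  proof -
    have "ennreal (sum (Fterm P) (T \<inter> A) + t * measure_pmf.prob P (A - T))
        = ennreal (sum (Fterm P) (T \<inter> A)) + ennreal (t * measure_pmf.prob P (A - T))"
      by (rule ennreal_plus) (auto intro: sum_nonneg Fterm_nonneg simp: t0)
    then show ?thesis using sum_Fterm_ennreal[of "T \<inter> A" P] finT by simp
  qed
  also have "\<dots> \<le> (\<Sum>\<^sub>\<infinity>p\<in>A. ennreal (Fterm P p)) + 2"
    unfolding split using rest by (intro add_mono) auto
  finally show ?thesis .
qed

end

lemma prefix_free_subset: "prefix_free C \<Longrightarrow> D \<subseteq> C \<Longrightarrow> prefix_free D"
  unfolding prefix_free_def by blast

lemma kraft_aux:
  "finite C \<Longrightarrow> prefix_free C \<Longrightarrow> (\<forall>c\<in>C. length c \<le> n) \<Longrightarrow> (\<Sum>c\<in>C. (1/2::real) ^ length c) \<le> 1"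
proof (induction n arbitrary: C)
  case 0
  then have "C \<subseteq> {[]}" by auto
  then have "C = {} \<or> C = {[]}" by blast
  then show ?case by auto
next
  case (Suc n)
  show ?case
  proof (cases "[] \<in> C")
    case True
    have "\<forall>c\<in>C. c = []" using Suc.prems(2) True unfolding prefix_free_def by (metis Nil_prefix)
    then have "C = {[]}" using True by blast
    then show ?thesis by simp
  next
    case False
    define C1 where "C1 = {c. True # c \<in> C}"
    define C0 where "C0 = {c. False # c \<in> C}"
    have CC: "C = Cons True ` C1 \<union> Cons False ` C0"
    proof (rule set_eqI)
      fix c show "c \<in> C \<longleftrightarrow> c \<in> Cons True ` C1 \<union> Cons False ` C0"
      proof (cases c)
        case Nil then show ?thesis using False by auto
      next
        case (Cons b t) then show ?thesis by (cases b) (auto simp: C1_def C0_def)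
      qed
    qed
    have f1: "finite C1" unfolding C1_def
      using finite_vimageI[OF Suc.prems(1), of "Cons True"] by (simp add: vimage_def)
    have f0: "finite C0" unfolding C0_def
      using finite_vimageI[OF Suc.prems(1), of "Cons False"] by (simp add: vimage_def)
    have p1: "prefix_free C1" using Suc.prems(2) unfolding prefix_free_def C1_def by fastforce
    have p0: "prefix_free C0" using Suc.prems(2) unfolding prefix_free_def C0_def by fastforce
    have l1: "\<forall>c\<in>C1. length c \<le> n" using Suc.prems(3) unfolding C1_def by fastforce
    have l0: "\<forall>c\<in>C0. length c \<le> n" using Suc.prems(3) unfolding C0_def by fastforce
    have "(\<Sum>c\<in>C. (1/2::real) ^ length c)
        = (\<Sum>c\<in>Cons True ` C1. (1/2::real) ^ length c) + (\<Sum>c\<in>Cons False ` C0. (1/2::real) ^ length c)"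
      unfolding CC by (rule sum.union_disjoint) (use f1 f0 in auto)
    also have "\<dots> = (1/2) * (\<Sum>c\<in>C1. (1/2::real) ^ length c) + (1/2) * (\<Sum>c\<in>C0. (1/2::real) ^ length c)"
      by (simp add: sum.reindex sum_distrib_left)
    also have "\<dots> \<le> (1/2) * 1 + (1/2) * 1"
      using Suc.IH[OF f1 p1 l1] Suc.IH[OF f0 p0 l0] by (intro add_mono mult_left_mono) auto
    finally show ?thesis by simp
  qed
qed

lemma kraft_finite:
  assumes "finite C" "prefix_free C" shows "(\<Sum>c\<in>C. (1/2::real) ^ length c) \<le> 1"
proof -
  have "\<forall>c\<in>C. length c \<le> Max (length ` C)" using assms(1) by auto
  then show ?thesis using kraft_aux assms by blast
qed

lemma half_pow: "(1/2::real) ^ n = 2 powr (- real n)"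
  by (simp add: powr_minus powr_realpow power_one_over inverse_eq_divide)

lemma kraft_y:
  fixes P :: "('a \<times> 'b) pmf" and \<phi> :: "'a \<Rightarrow> 'b \<Rightarrow> bool list" and \<psi>
  assumes pf: "prefix_free {\<phi> x y | x. (x,y) \<in> set_pmf P}"
    and F: "finite F" "F \<subseteq> {p \<in> set_pmf P. \<psi> (\<phi> (fst p) (snd p)) (snd p) = fst p}" "\<forall>p\<in>F. snd p = y"
  shows "(\<Sum>p\<in>F. (1/2::real) ^ length (\<phi> (fst p) y)) \<le> 1"
proof -
  have inj: "inj_on (\<lambda>p. \<phi> (fst p) y) F"
  proof (rule inj_onI)
    fix p q assume pq: "p\<in>F" "q\<in>F" "\<phi> (fst p) y = \<phi> (fst q) y"
    have "fst p = \<psi> (\<phi> (fst p) y) y" using pq(1) F(2,3) by auto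
    also have "\<dots> = fst q" using pq(2,3) F(2,3) by auto
    finally show "p = q" using pq F(3) by (simp add: prod_eq_iff)
  qed
  have "(\<Sum>p\<in>F. (1/2::real) ^ length (\<phi> (fst p) y)) = (\<Sum>c\<in>(\<lambda>p. \<phi> (fst p) y) ` F. (1/2::real) ^ length c)"
    by (simp add: sum.reindex[OF inj])
  also have "\<dots> \<le> 1"
  proof (rule kraft_finite)
    show "finite ((\<lambda>p. \<phi> (fst p) y) ` F)" using F(1) by simp
    show "prefix_free ((\<lambda>p. \<phi> (fst p) y) ` F)"
    proof (rule prefix_free_subset[OF pf])
      show "(\<lambda>p. \<phi> (fst p) y) ` F \<subseteq> {\<phi> x y | x. (x,y) \<in> set_pmf P}"
      proof
        fix c assume "c \<in> (\<lambda>p. \<phi> (fst p) y) ` F"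
        then obtain p where p: "p \<in> F" "c = \<phi> (fst p) y" by auto
        have "p \<in> set_pmf P" "snd p = y" using p(1) F(2,3) by auto
        then have "(fst p, y) \<in> set_pmf P" by (metis prod.collapse)
        then show "c \<in> {\<phi> x y | x. (x,y) \<in> set_pmf P}" using p(2) by blast
      qed
    qed
  qed
  finally show ?thesis .
qed

lemma kraft_pairs:
  fixes P :: "('a \<times> 'b) pmf" and \<phi> :: "'a \<Rightarrow> 'b \<Rightarrow> bool list" and \<psi>
  assumes pf: "\<And>y. prefix_free {\<phi> x y | x. (x,y) \<in> set_pmf P}"
    and F: "finite F" "F \<subseteq> {p \<in> set_pmf P. \<psi> (\<phi> (fst p) (snd p)) (snd p) = fst p}"
  shows "(\<Sum>p\<in>F. (1/2::real) ^ length (\<phi> (fst p) (snd p)) * pmf (map_pmf snd P) (snd p)) \<le> 1"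
proof -
  let ?g = "\<lambda>p. (1/2::real) ^ length (\<phi> (fst p) (snd p)) * pmf (map_pmf snd P) (snd p)"
  have "sum ?g F = (\<Sum>y\<in>snd ` F. sum ?g {p\<in>F. snd p = y})" by (rule sum.image_gen[OF F(1)])
  also have "\<dots> \<le> (\<Sum>y\<in>snd ` F. pmf (map_pmf snd P) y)"
  proof (rule sum_mono)
    fix y assume "y \<in> snd ` F"
    have "sum ?g {p\<in>F. snd p = y} = (\<Sum>p\<in>{p\<in>F. snd p = y}. pmf (map_pmf snd P) y * (1/2::real) ^ length (\<phi> (fst p) y))"
      by (rule sum.cong) auto
    also have "\<dots> = pmf (map_pmf snd P) y * (\<Sum>p\<in>{p\<in>F. snd p = y}. (1/2::real) ^ length (\<phi> (fst p) y))"
      by (simp add: sum_distrib_left)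
    also have "\<dots> \<le> pmf (map_pmf snd P) y * 1"
      by (intro mult_left_mono kraft_y[OF pf, where \<psi>=\<psi>]) (use F in auto)
    finally show "sum ?g {p\<in>F. snd p = y} \<le> pmf (map_pmf snd P) y" by simp
  qed
  also have "\<dots> = measure_pmf.prob (map_pmf snd P) (snd ` F)"
    by (rule measure_measure_pmf_finite[symmetric]) (use F(1) in simp)
  also have "\<dots> \<le> 1" by simp
  finally show ?thesis .
qed


lemma converse_oneshot:
  fixes P :: "('a list \<times> 'b list) pmf" and \<phi> :: "'a list \<Rightarrow> 'b list \<Rightarrow> bool list" and \<psi> and \<kappa> :: real
  assumes pf: "\<And>y. prefix_free {\<phi> x y | x. (x,y) \<in> set_pmf P}" and k0: "0 \<le> \<kappa>"
  defines "A \<equiv> {p \<in> set_pmf P. \<psi> (\<phi> (fst p) (snd p)) (snd p) = fst p \<and>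
      log 2 (1 / condP P p) \<le> real (length (\<phi> (fst p) (snd p))) + \<kappa>}"
  shows "1 - err_prob P \<phi> \<psi> - 2 powr (-\<kappa>) \<le> measure_pmf.prob P A"
    and "(\<Sum>\<^sub>\<infinity>p\<in>A. ennreal (Fterm P p)) \<le> exp_len P \<phi> + ennreal \<kappa>"
proof -
  define C where "C = {p \<in> set_pmf P. \<psi> (\<phi> (fst p) (snd p)) (snd p) = fst p}"
  define D where "D = {p \<in> C. real (length (\<phi> (fst p) (snd p))) + \<kappa> < log 2 (1 / condP P p)}"
  define W where "W = {(x,y). \<psi> (\<phi> x y) y \<noteq> x}"
  define g where "g p = (1/2::real) ^ length (\<phi> (fst p) (snd p)) * pmf (map_pmf snd P) (snd p)" for p
  have err: "err_prob P \<phi> \<psi> = measure_pmf.prob P W" by (simp add: err_prob_def W_def)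
  have cover: "UNIV \<subseteq> A \<union> W \<union> D \<union> (- set_pmf P)"
  proof
    fix p :: "'a list \<times> 'b list"
    show "p \<in> A \<union> W \<union> D \<union> (- set_pmf P)"
      by (cases p) (auto simp: A_def C_def D_def W_def not_le)
  qed
  have pt: "ennreal (pmf P p) \<le> ennreal (2 powr (-\<kappa>)) * ennreal (g p)" if pD: "p \<in> D" for p
  proof -
    have pS: "p \<in> set_pmf P" using pD by (simp add: D_def C_def)
    have c0: "0 < condP P p" using condP_pos(1)[OF pS] .
    have m0: "0 < pmf (map_pmf snd P) (snd p)"
      using pS pmf_le_marg[of P p] by (simp add: set_pmf_iff) (smt (verit) pmf_nonneg)
    let ?L = "real (length (\<phi> (fst p) (snd p))) + \<kappa>"
    have "?L < log 2 (1 / condP P p)" using pD by (simp add: D_def)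
    then have "2 powr ?L < 1 / condP P p" using c0 by (simp add: less_log_iff)
    then have "condP P p < 1 / 2 powr ?L" using c0 by (simp add: field_simps)
    then have "condP P p < 2 powr (-\<kappa>) * (1/2::real) ^ length (\<phi> (fst p) (snd p))"
      by (simp add: half_pow powr_minus powr_add field_simps powr_realpow)
    then have "pmf P p < 2 powr (-\<kappa>) * g p"
      using m0 unfolding condP_def g_def by (simp add: field_simps)
    then show ?thesis by (simp add: ennreal_mult[symmetric] ennreal_leI g_def)
  qed
  have gsum: "(\<Sum>\<^sub>\<infinity>p\<in>D. ennreal (g p)) \<le> 1"
  proof -
    have "(\<Sum>\<^sub>\<infinity>p\<in>D. ennreal (g p)) = (SUP F\<in>{F. finite F \<and> F\<subseteq>D}. sum (\<lambda>p. ennreal (g p)) F)"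
      by (rule nonneg_infsum_complete) simp
    also have "\<dots> \<le> 1"
    proof (rule SUP_least)
      fix F assume F: "F \<in> {F. finite F \<and> F\<subseteq>D}"
      then have "sum (\<lambda>p. ennreal (g p)) F = ennreal (sum g F)"
        by (intro sum_ennreal) (simp add: g_def)
      also have "\<dots> \<le> ennreal 1"
        using kraft_pairs[OF pf, of F \<psi>] F unfolding g_def C_def D_def by (intro ennreal_leI) auto
      finally show "sum (\<lambda>p. ennreal (g p)) F \<le> 1" by simp
    qed
    finally show ?thesis .
  qed
  have PD: "measure_pmf.prob P D \<le> 2 powr (-\<kappa>)"
  proof -
    have "ennreal (measure_pmf.prob P D) = (\<Sum>\<^sub>\<infinity>p\<in>D. ennreal (pmf P p))" by (simp add: infsum_pmf_ennreal)
    also have "\<dots> \<le> (\<Sum>\<^sub>\<infinity>p\<in>D. ennreal (2 powr (-\<kappa>)) * ennreal (g p))"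
      using pt by (intro infsum_mono) simp_all
    also have "\<dots> = ennreal (2 powr (-\<kappa>)) * (\<Sum>\<^sub>\<infinity>p\<in>D. ennreal (g p))" by (rule ennreal_infsum_cmult)
    also have "\<dots> \<le> ennreal (2 powr (-\<kappa>)) * 1" using gsum by (intro mult_left_mono) auto
    finally show ?thesis by (simp add: ennreal_le_iff)
  qed
  have N0: "measure_pmf.prob P (- set_pmf P) = 0" by (simp add: measure_pmf_zero_iff)
  have "1 = measure_pmf.prob P (A \<union> W \<union> D \<union> (- set_pmf P))"
  proof -
    have "A \<union> W \<union> D \<union> (- set_pmf P) = UNIV" using cover by blast
    then show ?thesis by simp
  qed
  also have "\<dots> \<le> measure_pmf.prob P (A \<union> W \<union> D) + measure_pmf.prob P (- set_pmf P)"
    by (rule measure_Un_le) auto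
  also have "\<dots> \<le> measure_pmf.prob P (A \<union> W) + measure_pmf.prob P D"
    using N0 measure_Un_le[of "A \<union> W" "measure_pmf P" D] by auto
  also have "\<dots> \<le> measure_pmf.prob P A + measure_pmf.prob P W + measure_pmf.prob P D"
    using measure_Un_le[of A "measure_pmf P" W] by auto
  finally show "1 - err_prob P \<phi> \<psi> - 2 powr (-\<kappa>) \<le> measure_pmf.prob P A"
    using PD err by linarith
next
  let ?l = "\<lambda>p. length (\<phi> (fst p) (snd p))"
  have "(\<Sum>\<^sub>\<infinity>p\<in>A. ennreal (Fterm P p))
      \<le> (\<Sum>\<^sub>\<infinity>p\<in>A. ennreal (pmf P p) * of_nat (?l p) + ennreal \<kappa> * ennreal (pmf P p))"
  proof (rule infsum_mono)
    fix p assume pA: "p \<in> A"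
    have "Fterm P p \<le> pmf P p * (real (?l p) + \<kappa>)"
      using pA unfolding A_def Fterm_def by (intro mult_left_mono) auto
    then have "ennreal (Fterm P p) \<le> ennreal (pmf P p * real (?l p) + \<kappa> * pmf P p)"
      by (intro ennreal_leI) (simp add: algebra_simps)
    also have "\<dots> = ennreal (pmf P p) * of_nat (?l p) + ennreal \<kappa> * ennreal (pmf P p)"
      using k0 by (simp add: ennreal_plus ennreal_mult ennreal_of_nat_eq_real_of_nat)
    finally show "ennreal (Fterm P p) \<le> ennreal (pmf P p) * of_nat (?l p) + ennreal \<kappa> * ennreal (pmf P p)" .
  qed simp_all
  also have "\<dots> = (\<Sum>\<^sub>\<infinity>p\<in>A. ennreal (pmf P p) * of_nat (?l p)) + ennreal \<kappa> * (\<Sum>\<^sub>\<infinity>p\<in>A. ennreal (pmf P p))"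
    by (simp add: infsum_add ennreal_infsum_cmult)
  also have "\<dots> \<le> exp_len P \<phi> + ennreal \<kappa> * 1"
  proof (rule add_mono)
    show "(\<Sum>\<^sub>\<infinity>p\<in>A. ennreal (pmf P p) * of_nat (?l p)) \<le> exp_len P \<phi>"
      unfolding exp_len_def by (rule infsum_mono_neutral) simp_all
    show "ennreal \<kappa> * (\<Sum>\<^sub>\<infinity>p\<in>A. ennreal (pmf P p)) \<le> ennreal \<kappa> * 1"
      by (intro mult_left_mono) (simp_all add: infsum_pmf_ennreal)
  qed
  finally show "(\<Sum>\<^sub>\<infinity>p\<in>A. ennreal (Fterm P p)) \<le> exp_len P \<phi> + ennreal \<kappa>" by simp
qed

lemma LB_fin: "finite {bs::bool list. length bs = n}"
  using finite_lists_length_eq[of "UNIV::bool set" n] by simp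

lemma LB_card: "card {bs::bool list. length bs = n} = 2 ^ n"
  using card_lists_length_eq[of "UNIV::bool set" n] by simp

lemma inj_into_LB:
  assumes "finite X" "card X \<le> 2 ^ n"
  shows "\<exists>f. f ` X \<subseteq> {bs::bool list. length bs = n} \<and> inj_on f X"
  using card_le_inj[OF assms(1) LB_fin] assms(2) LB_card by metis

lemma prefix_eq_len: "prefix xs ys \<Longrightarrow> length xs = length ys \<Longrightarrow> xs = ys"
  by (metis append_Nil2 append_eq_append_conv prefix_def)

lemma card_bound_class:
  fixes C :: "'x set" and q :: "'x \<Rightarrow> real" and M c :: real
  assumes pos: "0 < c" and lb: "\<And>x. x \<in> C \<Longrightarrow> c \<le> q x"
    and ub: "\<And>F. finite F \<Longrightarrow> F \<subseteq> C \<Longrightarrow> sum q F \<le> M"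
    and K: "M \<le> c * K"
  shows "finite C \<and> card C \<le> K"
proof -
  have cb: "card F \<le> K" if F: "finite F" "F \<subseteq> C" for F
  proof -
    have "c * card F = (\<Sum>x\<in>F. c)" by simp
    also have "\<dots> \<le> sum q F" using lb F by (intro sum_mono) auto
    also have "\<dots> \<le> M" using ub F by simp
    also have "\<dots> \<le> c * K" using K .
    finally show ?thesis using pos by simp
  qed
  have fin: "finite C"
  proof (rule ccontr)
    assume "\<not> finite C"
    then obtain F where "finite F" "card F = Suc K" "F \<subseteq> C" using infinite_arbitrarily_large by blast
    with cb show False by fastforce
  qed
  then show ?thesis using cb by blast
qed


lemma achiev_oneshot:
  fixes P :: "('a list \<times> 'b list) pmf" and A and B :: real and h :: nat
  assumes m: "0 < measure_pmf.prob P A" and B0: "0 \<le> B"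
    and HB: "ennreal (measure_pmf.prob P A) * H_A P A \<le> ennreal B"
  shows "\<exists>\<phi> \<psi>. (\<forall>y. prefix_free {\<phi> x y | x. True}) \<and>
     err_prob P \<phi> \<psi> \<le> 1 - measure_pmf.prob P A + (B + 1) / 2 ^ h \<and>
     exp_len P \<phi> \<le> ennreal (B + real h + 2)"
proof -
  define my where "my p = measure_pmf.prob P (A \<inter> snd -` {snd p})" for p :: "'a list \<times> 'b list"
  define r where "r p = my p / pmf P p" for p
  define S where "S = A \<inter> set_pmf P"
  define k where "k p = nat \<lceil>log 2 (r p)\<rceil>" for p
  define G where "G = {p \<in> S. k p < 2 ^ h}"
  define f where "f p = pmf P p * log 2 (r p)" for p
  have pS: "0 < pmf P p" if "p \<in> S" for p using that by (simp add: S_def pmf_positive)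
  have r1: "1 \<le> r p" if "p \<in> S" for p
    using ratio_ge1[of p A P] that pS[OF that] by (simp add: S_def r_def my_def)
  have lr0: "0 \<le> log 2 (r p)" if "p \<in> S" for p using r1[OF that] by simp
  have f0: "0 \<le> f p" if "p \<in> S" for p using lr0[OF that] by (simp add: f_def)
  have kge: "log 2 (r p) \<le> real (k p)" if "p \<in> S" for p
    unfolding k_def using lr0[OF that] by (simp add: le_of_int_ceiling)
  have kle: "real (k p) \<le> log 2 (r p) + 1" if "p \<in> S" for p
    unfolding k_def using lr0[OF that] of_int_ceiling_le_add_one[of "log 2 (r p)"] by simp
  have F1: "(\<Sum>\<^sub>\<infinity>p\<in>S. ennreal (f p)) \<le> ennreal B"
  proof -
    let ?Q = "cond_pmf P A"
    define g where "g p = ennreal (pmf ?Q p * log 2 (pmf (map_pmf snd ?Q) (snd p) / pmf ?Q p))" for p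
    have "(\<Sum>\<^sub>\<infinity>p\<in>S. ennreal (f p)) = (\<Sum>\<^sub>\<infinity>p\<in>S. ennreal (measure_pmf.prob P A) * g p)"
    proof (rule infsum_cong)
      fix p assume p: "p \<in> S"
      have "ennreal (measure_pmf.prob P A) * g p
          = ennreal (measure_pmf.prob P A * (pmf ?Q p * log 2 (pmf (map_pmf snd ?Q) (snd p) / pmf ?Q p)))"
        unfolding g_def by (simp add: ennreal_mult')
      also have "\<dots> = ennreal (f p)"
        using HA_term[OF m, of p] p pS[OF p] by (simp add: S_def f_def r_def my_def)
      finally show "ennreal (f p) = ennreal (measure_pmf.prob P A) * g p" by simp
    qed
    also have "\<dots> \<le> (\<Sum>\<^sub>\<infinity>p. ennreal (measure_pmf.prob P A) * g p)"
      by (rule infsum_mono_neutral) simp_all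
    also have "\<dots> = ennreal (measure_pmf.prob P A) * H_A P A"
      unfolding H_A_def g_def Let_def by (rule ennreal_infsum_cmult)
    finally show ?thesis using HB by simp
  qed
  have F3: "measure_pmf.prob P (S - G) \<le> (B + 1) / 2 ^ h"
  proof -
    have "ennreal (2 ^ h) * ennreal (measure_pmf.prob P (S - G))
        = (\<Sum>\<^sub>\<infinity>p\<in>S - G. ennreal (2 ^ h) * ennreal (pmf P p))"
      by (simp add: infsum_pmf_ennreal ennreal_infsum_cmult)
    also have "\<dots> \<le> (\<Sum>\<^sub>\<infinity>p\<in>S - G. ennreal (f p) + ennreal (pmf P p))"
    proof (rule infsum_mono)
      fix p assume p: "p \<in> S - G"
      then have "2 ^ h \<le> k p" using p by (auto simp: G_def not_less)
      then have "real (2 ^ h) \<le> real (k p)" by (simp only: of_nat_le_iff)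
      moreover have "real (k p) \<le> log 2 (r p) + 1" using kle[of p] p by blast
      ultimately have "real (2 ^ h) \<le> log 2 (r p) + 1" by (rule order_trans)
      then have "real (2 ^ h) * pmf P p \<le> (log 2 (r p) + 1) * pmf P p"
        using pmf_nonneg[of P p] by (rule mult_right_mono)
      then have "2 ^ h * pmf P p \<le> f p + pmf P p"
        unfolding f_def by (simp add: algebra_simps)
      then have "ennreal (2 ^ h * pmf P p) \<le> ennreal (f p + pmf P p)" by (rule ennreal_leI)
      then show "ennreal (2 ^ h) * ennreal (pmf P p) \<le> ennreal (f p) + ennreal (pmf P p)"
        using f0[of p] p by (simp add: ennreal_mult ennreal_plus)
    qed simp_all
    also have "\<dots> \<le> (\<Sum>\<^sub>\<infinity>p\<in>S. ennreal (f p) + ennreal (pmf P p))"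
      by (rule infsum_mono_neutral) auto
    also have "\<dots> = (\<Sum>\<^sub>\<infinity>p\<in>S. ennreal (f p)) + (\<Sum>\<^sub>\<infinity>p\<in>S. ennreal (pmf P p))"
      by (simp add: infsum_add)
    also have "\<dots> \<le> ennreal B + ennreal 1"
      using F1 by (intro add_mono) (simp_all add: infsum_pmf_ennreal)
    finally have "ennreal (2 ^ h * measure_pmf.prob P (S - G)) \<le> ennreal (B + 1)"
      using B0 by (simp add: ennreal_mult ennreal_plus)
    moreover have "ennreal B + 1 = ennreal (B + 1)" by (simp add: ennreal_plus[OF B0 zero_le_one])
    ultimately have "ennreal (2 ^ h * measure_pmf.prob P (S - G)) \<le> ennreal (B + 1)" by simp
    then have "2 ^ h * measure_pmf.prob P (S - G) \<le> B + 1"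
      using B0 by (metis ennreal_le_iff add_nonneg_nonneg zero_le_one)
    then show ?thesis by (simp add: field_simps)
  qed
  define Cl where "Cl y j = {x. (x,y) \<in> G \<and> k (x,y) = j}" for y j
  have clfin: "finite (Cl y j) \<and> card (Cl y j) \<le> 2 ^ j" for y j
  proof (cases "Cl y j = {}")
    case True then show ?thesis by simp
  next
    case False
    then obtain x0 where x0: "x0 \<in> Cl y j" by blast
    define M where "M = measure_pmf.prob P (A \<inter> snd -` {y})"
    have x0S: "(x0, y) \<in> S" using x0 by (simp add: Cl_def G_def)
    have "pmf P (x0,y) \<le> M" using r1[OF x0S] pS[OF x0S] by (simp add: r_def my_def M_def field_simps)
    then have M0: "0 < M" using pS[OF x0S] by linarith
    show ?thesis
    proof (rule card_bound_class[where q = "\<lambda>x. pmf P (x,y)" and M = M and c = "M / 2 ^ j"])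
      show "0 < M / 2 ^ j" using M0 by simp
      show "M \<le> M / 2 ^ j * real (2 ^ j)" by simp
    next
      fix x assume x: "x \<in> Cl y j"
      have xS: "(x, y) \<in> S" and kx: "k (x,y) = j" using x by (auto simp: Cl_def G_def)
      have "log 2 (r (x,y)) \<le> real j" using kge[OF xS] kx by simp
      then have "r (x,y) \<le> 2 powr real j" using r1[OF xS] by (simp add: log_le_iff)
      then have "M / pmf P (x,y) \<le> 2 ^ j" by (simp add: r_def my_def M_def powr_realpow)
      then show "M / 2 ^ j \<le> pmf P (x,y)" using pS[OF xS] by (simp add: field_simps)
    next
      fix F assume F: "finite F" "F \<subseteq> Cl y j"
      have inj: "inj_on (\<lambda>x. (x,y)) F" by (auto intro: inj_onI)
      have "(\<Sum>x\<in>F. pmf P (x,y)) = measure_pmf.prob P ((\<lambda>x. (x,y)) ` F)"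
        using F(1) inj by (simp add: measure_measure_pmf_finite sum.reindex)
      also have "\<dots> \<le> M" unfolding M_def
        using F(2) by (intro measure_pmf.finite_measure_mono) (auto simp: Cl_def G_def S_def)
      finally show "(\<Sum>x\<in>F. pmf P (x,y)) \<le> M" .
    qed
  qed
  obtain hd where hd: "hd ` {..<(2::nat)^h} \<subseteq> {bs::bool list. length bs = h}" "inj_on hd {..<(2::nat)^h}"
    using inj_into_LB[of "{..<(2::nat)^h}" h] by auto
  have "\<forall>y j. \<exists>g. g ` Cl y j \<subseteq> {bs::bool list. length bs = j} \<and> inj_on g (Cl y j)"
    using inj_into_LB clfin by blast
  then obtain idx where idx: "\<And>y j. idx y j ` Cl y j \<subseteq> {bs::bool list. length bs = j} \<and> inj_on (idx y j) (Cl y j)"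
    by metis
  define \<phi> where "\<phi> x y = (if (x,y) \<in> G then True # hd (k (x,y)) @ idx y (k (x,y)) x else [False])" for x y
  define \<psi> where "\<psi> c y = (SOME x. (x,y) \<in> G \<and> \<phi> x y = c)" for c y
  have lenhd: "length (hd j) = h" if "j < 2 ^ h" for j using hd(1) that by auto
  have lenidx: "length (idx y (k (x,y)) x) = k (x,y)" if "(x,y) \<in> G" for x y
    using idx[of y "k (x,y)"] that by (auto simp: Cl_def)
  have injphi: "x = x'" if G1: "(x,y) \<in> G" and G2: "(x',y) \<in> G" and eq: "\<phi> x y = \<phi> x' y" for x x' y
  proof -
    have k1: "k (x,y) < 2 ^ h" and k2: "k (x',y) < 2 ^ h" using G1 G2 by (auto simp: G_def)
    have "hd (k (x,y)) @ idx y (k (x,y)) x = hd (k (x',y)) @ idx y (k (x',y)) x'"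
      using eq G1 G2 by (simp add: \<phi>_def)
    then have e1: "hd (k (x,y)) = hd (k (x',y))" and e2: "idx y (k (x,y)) x = idx y (k (x',y)) x'"
      using lenhd[OF k1] lenhd[OF k2] by (simp_all add: append_eq_append_conv)
    have kk: "k (x,y) = k (x',y)" using inj_onD[OF hd(2) e1] k1 k2 by simp
    have "x \<in> Cl y (k (x,y))" "x' \<in> Cl y (k (x,y))" using G1 G2 kk by (auto simp: Cl_def)
    then show ?thesis using idx[of y "k (x,y)"] e2 kk by (auto dest: inj_onD)
  qed
  have dec: "\<psi> (\<phi> x y) y = x" if "(x,y) \<in> G" for x y
  proof -
    have "(\<psi> (\<phi> x y) y, y) \<in> G \<and> \<phi> (\<psi> (\<phi> x y) y) y = \<phi> x y"
      unfolding \<psi>_def by (rule someI[of _ x]) (use that in simp)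
    then show ?thesis using injphi that by blast
  qed
  have pf: "prefix_free {\<phi> x y | x. True}" for y
    unfolding prefix_free_def
  proof (intro ballI impI)
    fix c c' assume c: "c \<in> {\<phi> x y | x. True}" and c': "c' \<in> {\<phi> x y | x. True}" and pr: "prefix c c'"
    obtain x where x: "c = \<phi> x y" using c by auto
    obtain x' where x': "c' = \<phi> x' y" using c' by auto
    show "c = c'"
    proof (cases "(x,y) \<in> G")
      case False
      then have "c = [False]" using x by (simp add: \<phi>_def)
      then show ?thesis using pr x' by (cases "(x',y) \<in> G") (auto simp: \<phi>_def)
    next
      case True
      then have cc: "c = True # hd (k (x,y)) @ idx y (k (x,y)) x" using x by (simp add: \<phi>_def)
      show ?thesis
      proof (cases "(x',y) \<in> G")
        case False
        then show ?thesis using pr cc x' by (simp add: \<phi>_def)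
      next
        case True2: True
        then have cc': "c' = True # hd (k (x',y)) @ idx y (k (x',y)) x'" using x' by (simp add: \<phi>_def)
        have k1: "k (x,y) < 2 ^ h" and k2: "k (x',y) < 2 ^ h" using True True2 by (auto simp: G_def)
        obtain zs where zs: "c' = c @ zs" using pr by (auto simp: prefix_def)
        then have "hd (k (x',y)) @ idx y (k (x',y)) x' = hd (k (x,y)) @ (idx y (k (x,y)) x @ zs)"
          using cc cc' by simp
        then have e1: "hd (k (x',y)) = hd (k (x,y))" and e2: "idx y (k (x',y)) x' = idx y (k (x,y)) x @ zs"
          using lenhd[OF k1] lenhd[OF k2] by (simp_all add: append_eq_append_conv)
        have kk: "k (x,y) = k (x',y)" using inj_onD[OF hd(2) e1] k1 k2 by simp
        have "length zs = 0" using e2 lenidx[OF True] lenidx[OF True2] kk by simp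
        then show ?thesis using zs by simp
      qed
    qed
  qed
  have err: "err_prob P \<phi> \<psi> \<le> 1 - measure_pmf.prob P A + (B + 1) / 2 ^ h"
  proof -
    have "err_prob P \<phi> \<psi> \<le> measure_pmf.prob P ((- A) \<union> (- set_pmf P) \<union> (S - G))"
      unfolding err_prob_def
      by (rule measure_pmf.finite_measure_mono) (auto simp: S_def dec)
    also have "\<dots> \<le> measure_pmf.prob P ((- A) \<union> (- set_pmf P)) + measure_pmf.prob P (S - G)"
      by (rule measure_Un_le) auto
    also have "\<dots> \<le> measure_pmf.prob P (- A) + measure_pmf.prob P (- set_pmf P) + measure_pmf.prob P (S - G)"
      using measure_Un_le[of "- A" "measure_pmf P" "- set_pmf P"] by auto
    also have "\<dots> \<le> 1 - measure_pmf.prob P A + 0 + (B + 1) / 2 ^ h"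
    proof -
      have "measure_pmf.prob P (- A) = 1 - measure_pmf.prob P A"
        using measure_pmf.prob_compl[of A P] by (simp add: Compl_eq_Diff_UNIV)
      moreover have "measure_pmf.prob P (- set_pmf P) = 0" by (simp add: measure_pmf_zero_iff)
      ultimately show ?thesis using F3 by linarith
    qed
    finally show ?thesis by simp
  qed
  have len: "exp_len P \<phi> \<le> ennreal (B + real h + 2)"
  proof -
    define u where "u p = (if p \<in> S then ennreal (f p) else 0)" for p
    have "exp_len P \<phi> \<le> (\<Sum>\<^sub>\<infinity>p. ennreal (real h + 2) * ennreal (pmf P p) + u p)"
      unfolding exp_len_def
    proof (rule infsum_mono)
      fix p :: "'a list \<times> 'b list"
      show "ennreal (pmf P p) * of_nat (length (\<phi> (fst p) (snd p)))
          \<le> ennreal (real h + 2) * ennreal (pmf P p) + u p"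
      proof (cases "p \<in> G")
        case True
        then have pS': "p \<in> S" and kp: "k p < 2 ^ h" by (auto simp: G_def)
        have l: "length (\<phi> (fst p) (snd p)) = 1 + h + k p"
          using True lenhd[OF kp] lenidx[of "fst p" "snd p"] by (simp add: \<phi>_def)
        have "real (length (\<phi> (fst p) (snd p))) \<le> real h + 2 + log 2 (r p)"
          using l kle[OF pS'] by simp
        then have "pmf P p * real (length (\<phi> (fst p) (snd p))) \<le> (real h + 2) * pmf P p + f p"
          unfolding f_def using pmf_nonneg[of P p]
          by (metis (no_types, opaque_lifting) distrib_left mult.commute mult_left_mono)
        then have "ennreal (pmf P p * real (length (\<phi> (fst p) (snd p)))) \<le> ennreal ((real h + 2) * pmf P p + f p)"
          by (rule ennreal_leI)
        then show ?thesis using pS' f0[OF pS']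
          by (simp add: u_def ennreal_mult ennreal_plus ennreal_of_nat_eq_real_of_nat)
      next
        case False
        then have l: "length (\<phi> (fst p) (snd p)) = 1" by (simp add: \<phi>_def)
        have "ennreal (pmf P p) * of_nat (length (\<phi> (fst p) (snd p))) \<le> ennreal (real h + 2) * ennreal (pmf P p)"
        proof -
          have "1 * pmf P p \<le> (real h + 2) * pmf P p"
            by (rule mult_right_mono) (simp_all add: pmf_nonneg)
          then have "ennreal (pmf P p) \<le> ennreal ((real h + 2) * pmf P p)" by (intro ennreal_leI) simp
          also have "\<dots> = ennreal (real h + 2) * ennreal (pmf P p)" by (subst ennreal_mult) auto
          finally show ?thesis using l by simp
        qed
        then show ?thesis by (simp add: add_increasing2)
      qed
    qed simp_all
    also have "\<dots> = ennreal (real h + 2) * (\<Sum>\<^sub>\<infinity>p. ennreal (pmf P p)) + (\<Sum>\<^sub>\<infinity>p. u p)"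
      by (simp add: infsum_add ennreal_infsum_cmult)
    also have "(\<Sum>\<^sub>\<infinity>p. u p) = (\<Sum>\<^sub>\<infinity>p\<in>S. ennreal (f p))"
      by (rule infsum_cong_neutral) (auto simp: u_def)
    also have "(\<Sum>\<^sub>\<infinity>p. ennreal (pmf P p)) = 1" by (simp add: infsum_pmf_ennreal)
    also have "ennreal (real h + 2) * 1 + (\<Sum>\<^sub>\<infinity>p\<in>S. ennreal (f p)) \<le> ennreal (real h + 2) + ennreal B"
      using F1 by simp
    also have "\<dots> = ennreal (B + real h + 2)" using B0 by (simp add: ennreal_plus[symmetric] add.commute add.left_commute)
    finally show ?thesis .
  qed
  show ?thesis using pf err len by blast
qed

lemma limsup_le_eps:
  fixes X :: "nat \<Rightarrow> ennreal"
  assumes "\<And>d. 0 < d \<Longrightarrow> limsup X \<le> L + ennreal d"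
  shows "limsup X \<le> L"
proof (rule ennreal_le_epsilon)
  fix e :: real assume "L < top" "0 < e"
  then show "limsup X \<le> L + ennreal e" using assms by blast
qed

lemma limsup_shift_const:
  fixes X Y :: "nat \<Rightarrow> ennreal" and c :: real
  assumes ev: "eventually (\<lambda>n. X n \<le> Y n + ennreal c) sequentially"
  shows "limsup (\<lambda>n. ennreal (1 / real n) * X n) \<le> limsup (\<lambda>n. ennreal (1 / real n) * Y n)"
proof (rule limsup_le_eps)
  fix d :: real assume d: "0 < d"
  have "eventually (\<lambda>n. c / real n \<le> d) sequentially"
  proof -
    have "((\<lambda>n. c / real n) \<longlongrightarrow> 0) sequentially"
      by (rule tendsto_divide_0[OF tendsto_const]) (rule filterlim_at_top_imp_at_infinity[OF filterlim_real_sequentially])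
    then have "eventually (\<lambda>n. c / real n < d) sequentially" using d by (rule order_tendstoD(2))
    then show ?thesis by (rule eventually_mono) simp
  qed
  then have "eventually (\<lambda>n. ennreal (1 / real n) * X n \<le> ennreal (1 / real n) * Y n + ennreal d) sequentially"
    using ev
  proof eventually_elim
    case (elim n)
    have "ennreal (1 / real n) * X n \<le> ennreal (1 / real n) * (Y n + ennreal c)"
      using elim(2) by (rule mult_left_mono) simp
    also have "\<dots> = ennreal (1 / real n) * Y n + ennreal (1 / real n) * ennreal c"
      by (simp add: distrib_left)
    also have "ennreal (1 / real n) * ennreal c \<le> ennreal d"
    proof (cases "c \<le> 0")
      case True then have "ennreal c = 0" by (simp add: ennreal_eq_0_iff)
      then show ?thesis by simp
    next
      case False
      then have "ennreal (1 / real n) * ennreal c = ennreal (c / real n)"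
        by (subst ennreal_mult[symmetric]) auto
      also have "\<dots> \<le> ennreal d" using elim(1) by (rule ennreal_leI)
      finally show ?thesis .
    qed
    finally show ?case by (simp add: add_left_mono)
  qed
  then have "limsup (\<lambda>n. ennreal (1 / real n) * X n) \<le> limsup (\<lambda>n. ennreal (1 / real n) * Y n + ennreal d)"
    by (rule Limsup_mono)
  also have "\<dots> = limsup (\<lambda>n. ennreal (1 / real n) * Y n) + ennreal d"
    using Limsup_const_add[of sequentially "ennreal d" "\<lambda>n. ennreal (1 / real n) * Y n"]
    by (simp add: add.commute)
  finally show "limsup (\<lambda>n. ennreal (1 / real n) * X n) \<le> limsup (\<lambda>n. ennreal (1 / real n) * Y n) + ennreal d" .
qed


lemma pf_from_valid:
  fixes P :: "nat \<Rightarrow> ('a::countable list \<times> 'b::countable list) pmf"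
  assumes gs: "general_source P" and v: "valid_code n \<phi>"
  shows "prefix_free {\<phi> x y | x. (x,y) \<in> set_pmf (P n)}"
proof (cases "length y = n")
  case True
  have "{\<phi> x y | x. (x,y) \<in> set_pmf (P n)} \<subseteq> {\<phi> x y | x. length x = n}"
    using gs unfolding general_source_def by blast
  moreover have "prefix_free {\<phi> x y | x. length x = n}" using v True unfolding valid_code_def by blast
  ultimately show ?thesis using prefix_free_subset by blast
next
  case False
  then have "{\<phi> x y | x. (x,y) \<in> set_pmf (P n)} = {}" using gs unfolding general_source_def by blast
  then show ?thesis unfolding prefix_free_def by simp
qed

lemma converse_ev:
  fixes P :: "nat \<Rightarrow> ('a::countable list \<times> 'b::countable list) pmf"
  assumes gs: "general_source P" and ach: "achievable P \<epsilon> R'"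
    and d: "0 < \<delta>" "\<delta> < 1" and e0: "0 \<le> \<epsilon>"
  shows "\<exists>\<phi>. limsup (\<lambda>n. ennreal (1 / real n) * exp_len (P n) (\<phi> n)) \<le> R' \<and>
     eventually (\<lambda>n. \<exists>A. 1 - (\<epsilon> + \<delta>) \<le> measure_pmf.prob (P n) A \<and>
        (\<Sum>\<^sub>\<infinity>p\<in>A. ennreal (Fterm (P n) p)) \<le> exp_len (P n) (\<phi> n) + ennreal (log 2 (2 / \<delta>))) sequentially"
proof -
  obtain \<phi> \<psi> where v: "\<forall>n. valid_code n (\<phi> n)"
    and e: "limsup (\<lambda>n. ennreal (err_prob (P n) (\<phi> n) (\<psi> n))) \<le> ennreal \<epsilon>"
    and l: "limsup (\<lambda>n. ennreal (1 / real n) * exp_len (P n) (\<phi> n)) \<le> R'"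
    using ach unfolding achievable_def by blast
  define \<kappa> where "\<kappa> = log 2 (2 / \<delta>)"
  have k0: "0 \<le> \<kappa>" unfolding \<kappa>_def using d by simp
  have k1: "2 powr (-\<kappa>) = \<delta> / 2" unfolding \<kappa>_def using d by (simp add: powr_minus)
  have "limsup (\<lambda>n. ennreal (err_prob (P n) (\<phi> n) (\<psi> n))) < ennreal (\<epsilon> + \<delta> / 2)"
  proof (rule le_less_trans[OF e])
    show "ennreal \<epsilon> < ennreal (\<epsilon> + \<delta> / 2)" using d e0 by (simp add: ennreal_less_iff)
  qed
  then have ev: "eventually (\<lambda>n. ennreal (err_prob (P n) (\<phi> n) (\<psi> n)) < ennreal (\<epsilon> + \<delta> / 2)) sequentially"
    by (rule Limsup_lessD)
  have "eventually (\<lambda>n. \<exists>A. 1 - (\<epsilon> + \<delta>) \<le> measure_pmf.prob (P n) A \<and>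
        (\<Sum>\<^sub>\<infinity>p\<in>A. ennreal (Fterm (P n) p)) \<le> exp_len (P n) (\<phi> n) + ennreal \<kappa>) sequentially"
    using ev
  proof eventually_elim
    case (elim n)
    have errlt: "err_prob (P n) (\<phi> n) (\<psi> n) < \<epsilon> + \<delta> / 2"
    proof -
      have "0 \<le> err_prob (P n) (\<phi> n) (\<psi> n)" by (simp add: err_prob_def)
      then show ?thesis using elim by (simp add: ennreal_less_iff)
    qed
    have pf: "\<And>y. prefix_free {\<phi> n x y | x. (x,y) \<in> set_pmf (P n)}"
      using pf_from_valid[OF gs] v by blast
    note c = converse_oneshot[OF pf k0, of "\<psi> n"]
    show ?case
      by (rule exI, rule conjI[OF _ c(2)]) (use c(1) errlt k1 in linarith)
  qed
  then show ?thesis using l unfolding \<kappa>_def by blast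
qed

lemma Hhat_le':
  assumes "sorted_enum P e" "0 < \<gamma>" "1 - \<gamma> \<le> measure_pmf.prob P A"
  shows "Hhat_eps P e \<gamma> \<le> (\<Sum>\<^sub>\<infinity>p\<in>A. ennreal (Fterm P p)) + 2"
  using assms Hhat_le unfolding sorted_enum_def by blast

lemma Ht_le_Hhat':
  assumes "sorted_enum P e" "0 < \<gamma>"
  shows "Htilde_eps P \<gamma> \<le> Hhat_eps P e \<gamma>"
  using assms Ht_le_Hhat unfolding sorted_enum_def by blast

lemma Ht_le_sum: "1 - \<gamma> \<le> measure_pmf.prob P A \<Longrightarrow> Htilde_eps P \<gamma> \<le> (\<Sum>\<^sub>\<infinity>p\<in>A. ennreal (Fterm P p))"
  unfolding Htilde_eps_def Fterm_def by (rule INF_lower) simp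

lemma converse_Ht_Hhat:
  fixes P :: "nat \<Rightarrow> ('a::countable list \<times> 'b::countable list) pmf"
  assumes gs: "general_source P" and ach: "achievable P \<epsilon> R'"
    and d: "0 < \<delta>" "\<epsilon> + \<delta> < 1" and e0: "0 \<le> \<epsilon>"
  shows "limsup (\<lambda>n. ennreal (1 / real n) * Htilde_eps (P n) (\<epsilon> + \<delta>)) \<le> R'"
    and "(\<forall>n. sorted_enum (P n) (e n)) \<Longrightarrow>
         limsup (\<lambda>n. ennreal (1 / real n) * Hhat_eps (P n) (e n) (\<epsilon> + \<delta>)) \<le> R'"
proof -
  have d1: "\<delta> < 1" using d e0 by simp
  obtain \<phi> where l: "limsup (\<lambda>n. ennreal (1 / real n) * exp_len (P n) (\<phi> n)) \<le> R'"
    and ev: "eventually (\<lambda>n. \<exists>A. 1 - (\<epsilon> + \<delta>) \<le> measure_pmf.prob (P n) A \<and>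
        (\<Sum>\<^sub>\<infinity>p\<in>A. ennreal (Fterm (P n) p)) \<le> exp_len (P n) (\<phi> n) + ennreal (log 2 (2 / \<delta>))) sequentially"
    using converse_ev[OF gs ach d(1) d1 e0] by blast
  have "eventually (\<lambda>n. Htilde_eps (P n) (\<epsilon> + \<delta>) \<le> exp_len (P n) (\<phi> n) + ennreal (log 2 (2 / \<delta>))) sequentially"
    using ev by eventually_elim (use Ht_le_sum order_trans in blast)
  then have "limsup (\<lambda>n. ennreal (1 / real n) * Htilde_eps (P n) (\<epsilon> + \<delta>))
      \<le> limsup (\<lambda>n. ennreal (1 / real n) * exp_len (P n) (\<phi> n))"
    by (rule limsup_shift_const)
  then show "limsup (\<lambda>n. ennreal (1 / real n) * Htilde_eps (P n) (\<epsilon> + \<delta>)) \<le> R'" using l by simp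
  assume se: "\<forall>n. sorted_enum (P n) (e n)"
  have g0: "0 < \<epsilon> + \<delta>" using d e0 by simp
  have k0: "0 \<le> log 2 (2 / \<delta>)" using d d1 by simp
  have "eventually (\<lambda>n. Hhat_eps (P n) (e n) (\<epsilon> + \<delta>) \<le> exp_len (P n) (\<phi> n) + ennreal (log 2 (2 / \<delta>) + 2)) sequentially"
    using ev
  proof eventually_elim
    case (elim n)
    then obtain A where A: "1 - (\<epsilon> + \<delta>) \<le> measure_pmf.prob (P n) A"
      "(\<Sum>\<^sub>\<infinity>p\<in>A. ennreal (Fterm (P n) p)) \<le> exp_len (P n) (\<phi> n) + ennreal (log 2 (2 / \<delta>))" by blast
    have "Hhat_eps (P n) (e n) (\<epsilon> + \<delta>) \<le> (\<Sum>\<^sub>\<infinity>p\<in>A. ennreal (Fterm (P n) p)) + 2"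
      using Hhat_le'[OF se[rule_format] g0 A(1)] .
    also have "\<dots> \<le> exp_len (P n) (\<phi> n) + ennreal (log 2 (2 / \<delta>)) + 2"
      using A(2) by (rule add_right_mono)
    also have "\<dots> = exp_len (P n) (\<phi> n) + ennreal (log 2 (2 / \<delta>) + 2)"
      using k0 by (simp add: ennreal_plus add.assoc)
    finally show ?case .
  qed
  then have "limsup (\<lambda>n. ennreal (1 / real n) * Hhat_eps (P n) (e n) (\<epsilon> + \<delta>))
      \<le> limsup (\<lambda>n. ennreal (1 / real n) * exp_len (P n) (\<phi> n))"
    by (rule limsup_shift_const)
  then show "limsup (\<lambda>n. ennreal (1 / real n) * Hhat_eps (P n) (e n) (\<epsilon> + \<delta>)) \<le> R'" using l by simp
qed

lemma asym1': "(\<lambda>n::nat. (2 * ln (real n + 1) / ln 2 + 3) / real n) \<longlonglongrightarrow> 0"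
  by real_asymp

lemma asym1: "(\<lambda>n::nat. (2 * log 2 (real n + 1) + 3) / real n) \<longlonglongrightarrow> 0"
  using asym1' by (simp add: log_def)

lemma asym2: "(\<lambda>n::nat. 1 / (real n + 1)) \<longlonglongrightarrow> 0"
  by real_asymp

definition hlen :: "nat \<Rightarrow> nat" where "hlen n = nat \<lceil>2 * log 2 (real n + 1)\<rceil>"

lemma hlen_real: "real (hlen n) = of_int \<lceil>2 * log 2 (real n + 1)\<rceil>"
proof -
  have "0 \<le> 2 * log 2 (real n + 1)" by simp
  then have "0 \<le> real_of_int \<lceil>2 * log 2 (real n + 1)\<rceil>"
    using le_of_int_ceiling[of "2 * log 2 (real n + 1)"] by linarith
  then have "0 \<le> \<lceil>2 * log 2 (real n + 1)\<rceil>" by simp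
  then show ?thesis unfolding hlen_def by simp
qed

lemma hlen_ge: "(real n + 1) ^ 2 \<le> 2 ^ hlen n"
proof -
  have pos: "0 < real n + 1" by simp
  have "2 powr (2 * log 2 (real n + 1)) = 2 powr (log 2 (real n + 1) + log 2 (real n + 1))"
    by (simp only: mult_2)
  also have "\<dots> = 2 powr log 2 (real n + 1) * 2 powr log 2 (real n + 1)" by (rule powr_add)
  also have "\<dots> = (real n + 1) ^ 2"
  proof -
    have e: "2 powr log 2 (real n + 1) = real n + 1" using pos by simp
    show ?thesis by (simp only: e power2_eq_square)
  qed
  finally have e2: "2 powr (2 * log 2 (real n + 1)) = (real n + 1) ^ 2" .
  have "(real n + 1) ^ 2 = 2 powr (2 * log 2 (real n + 1))" using e2 by (rule sym)
  also have "\<dots> \<le> 2 powr real (hlen n)"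
  proof (rule powr_mono)
    show "2 * log 2 (real n + 1) \<le> real (hlen n)" unfolding hlen_real by (rule le_of_int_ceiling)
  qed simp
  also have "\<dots> = 2 ^ hlen n" by (simp add: powr_realpow)
  finally show ?thesis .
qed

lemma hlen_le: "real (hlen n) \<le> 2 * log 2 (real n + 1) + 1"
  unfolding hlen_real using of_int_ceiling_le_add_one[of "2 * log 2 (real n + 1)"] by simp


lemma achiev_main:
  fixes P :: "nat \<Rightarrow> ('a::countable list \<times> 'b::countable list) pmf" and \<epsilon> l \<eta> :: real
  assumes e0: "0 \<le> \<epsilon>" and l0: "0 \<le> l" and eta: "0 < \<eta>"
    and H: "\<And>\<delta>. 0 < \<delta> \<Longrightarrow> limsup (\<lambda>n. ennreal (1 / real n) * H_eps (P n) (\<epsilon> + \<delta>)) \<le> ennreal l"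
  shows "achievable P \<epsilon> (ennreal (l + \<eta>))"
proof -
  define c where "c = l + \<eta> / 2"
  have c0: "0 \<le> c" using l0 eta by (simp add: c_def)
  have "\<forall>m. \<exists>N. \<forall>n\<ge>N. ennreal (1 / real n) * H_eps (P n) (\<epsilon> + 1 / real (Suc m)) < ennreal c"
  proof
    fix m
    have "limsup (\<lambda>n. ennreal (1 / real n) * H_eps (P n) (\<epsilon> + 1 / real (Suc m))) \<le> ennreal l"
      by (rule H) simp
    also have "ennreal l < ennreal c" using l0 eta by (simp add: c_def ennreal_less_iff)
    finally have "eventually (\<lambda>n. ennreal (1 / real n) * H_eps (P n) (\<epsilon> + 1 / real (Suc m)) < ennreal c) sequentially"
      by (rule Limsup_lessD)
    then show "\<exists>N. \<forall>n\<ge>N. ennreal (1 / real n) * H_eps (P n) (\<epsilon> + 1 / real (Suc m)) < ennreal c"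
      by (simp add: eventually_sequentially)
  qed
  then obtain N where N: "\<And>m n. N m \<le> n \<Longrightarrow> ennreal (1 / real n) * H_eps (P n) (\<epsilon> + 1 / real (Suc m)) < ennreal c"
    by metis
  define N2 where "N2 m = Max (N ` {..m}) + m + 1" for m
  have N2ge: "N i \<le> N2 m" if "i \<le> m" for i m
  proof -
    have "N i \<le> Max (N ` {..m})" using that by (intro Max_ge) auto
    then show ?thesis by (simp add: N2_def)
  qed
  have N2m: "m < N2 m" for m by (simp add: N2_def)
  have N2mono: "N2 m \<le> N2 m'" if "m \<le> m'" for m m'
  proof -
    have "Max (N ` {..m}) \<le> Max (N ` {..m'})" using that by (intro Max_mono) auto
    then show ?thesis using that unfolding N2_def by linarith
  qed
  define mm where "mm n = Max {m. N2 m \<le> n}" for n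
  have mmfin: "finite {m. N2 m \<le> n}" for n
  proof -
    have "{m. N2 m \<le> n} \<subseteq> {..n}" using N2m by (auto intro: less_imp_le order_less_le_trans)
    then show ?thesis using finite_subset by blast
  qed
  have mm_in: "N2 (mm n) \<le> n" if "N2 0 \<le> n" for n
  proof -
    have "mm n \<in> {m. N2 m \<le> n}" unfolding mm_def using that mmfin by (intro Max_in) auto
    then show ?thesis by simp
  qed
  have mm_ge: "m0 \<le> mm n" if "N2 m0 \<le> n" for m0 n
    unfolding mm_def using that mmfin by (intro Max_ge) auto
  have code: "\<forall>n. \<exists>\<phi> \<psi>. (\<forall>y. prefix_free {\<phi> x y | x. True}) \<and>
      (N2 0 \<le> n \<longrightarrow> err_prob (P n) \<phi> \<psi> \<le> \<epsilon> + 1 / real (Suc (mm n)) + (real n * c + 1) / (real n + 1) ^ 2 \<and>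
         exp_len (P n) \<phi> \<le> ennreal (real n * c + real (hlen n) + 2))"
  proof
    fix n
    show "\<exists>\<phi> \<psi>. (\<forall>y. prefix_free {\<phi> x y | x. True}) \<and>
      (N2 0 \<le> n \<longrightarrow> err_prob (P n) \<phi> \<psi> \<le> \<epsilon> + 1 / real (Suc (mm n)) + (real n * c + 1) / (real n + 1) ^ 2 \<and>
         exp_len (P n) \<phi> \<le> ennreal (real n * c + real (hlen n) + 2))"
    proof (cases "N2 0 \<le> n")
      case False
      have "\<forall>y. prefix_free {(\<lambda>(x::'a list) (y::'b list). []::bool list) x y | x. True}"
        by (simp add: prefix_free_def)
      then show ?thesis using False by (intro exI[of _ "\<lambda>(x::'a list) (y::'b list). []::bool list"]) blast
    next
      case True
      define \<gamma> where "\<gamma> = \<epsilon> + 1 / real (Suc (mm n))"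
      have Nn: "N (mm n) \<le> n" using N2ge[of "mm n" "mm n"] mm_in[OF True] by linarith
      have n1: "1 \<le> n" using N2m[of 0] True by linarith
      have lt: "ennreal (1 / real n) * H_eps (P n) \<gamma> < ennreal c" using N[OF Nn] by (simp add: \<gamma>_def)
      have Hlt: "H_eps (P n) \<gamma> < ennreal (real n * c)"
      proof (rule ccontr)
        assume "\<not> H_eps (P n) \<gamma> < ennreal (real n * c)"
        then have "ennreal (real n * c) \<le> H_eps (P n) \<gamma>" by simp
        then have "ennreal (1 / real n) * ennreal (real n * c) \<le> ennreal (1 / real n) * H_eps (P n) \<gamma>"
          by (rule mult_left_mono) simp
        moreover have "ennreal (1 / real n) * ennreal (real n * c) = ennreal c"
          using n1 c0 by (subst ennreal_mult[symmetric]) auto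
        ultimately show False using lt by simp
      qed
      then obtain A where A: "0 < measure_pmf.prob (P n) A" "1 - \<gamma> \<le> measure_pmf.prob (P n) A"
          "ennreal (measure_pmf.prob (P n) A) * H_A (P n) A < ennreal (real n * c)"
        unfolding H_eps_def by (auto simp: INF_less_iff)
      have B0: "0 \<le> real n * c" using c0 by simp
      obtain \<phi> \<psi> where all: "(\<forall>y. prefix_free {\<phi> x y | x. True}) \<and>
          err_prob (P n) \<phi> \<psi> \<le> 1 - measure_pmf.prob (P n) A + (real n * c + 1) / 2 ^ hlen n \<and>
          exp_len (P n) \<phi> \<le> ennreal (real n * c + real (hlen n) + 2)"
        using achiev_oneshot[OF A(1) B0 less_imp_le[OF A(3)], of "hlen n"] by (elim exE) (rule that)
      note pf = conjunct1[OF all]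
      note err = conjunct1[OF conjunct2[OF all]]
      note len = conjunct2[OF conjunct2[OF all]]
      have hpos: "0 < (real n + 1) ^ 2" by simp
      have "(real n * c + 1) / 2 ^ hlen n \<le> (real n * c + 1) / (real n + 1) ^ 2"
      proof (rule divide_left_mono)
        show "(real n + 1) ^ 2 \<le> 2 ^ hlen n" by (rule hlen_ge)
        show "0 \<le> real n * c + 1" using B0 by linarith
        show "0 < 2 ^ hlen n * (real n + 1) ^ 2" using hpos by simp
      qed
      then have "err_prob (P n) \<phi> \<psi> \<le> \<epsilon> + 1 / real (Suc (mm n)) + (real n * c + 1) / (real n + 1) ^ 2"
        using err A(2) unfolding \<gamma>_def by linarith
      then show ?thesis using pf len by (intro exI conjI impI)
    qed
  qed
  then have "\<exists>\<Phi>. \<forall>n. \<exists>\<psi>. (\<forall>y. prefix_free {\<Phi> n x y | x. True}) \<and>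
      (N2 0 \<le> n \<longrightarrow> err_prob (P n) (\<Phi> n) \<psi> \<le> \<epsilon> + 1 / real (Suc (mm n)) + (real n * c + 1) / (real n + 1) ^ 2 \<and>
         exp_len (P n) (\<Phi> n) \<le> ennreal (real n * c + real (hlen n) + 2))"
    by (rule choice)
  then obtain \<Phi> where "\<forall>n. \<exists>\<psi>. (\<forall>y. prefix_free {\<Phi> n x y | x. True}) \<and>
      (N2 0 \<le> n \<longrightarrow> err_prob (P n) (\<Phi> n) \<psi> \<le> \<epsilon> + 1 / real (Suc (mm n)) + (real n * c + 1) / (real n + 1) ^ 2 \<and>
         exp_len (P n) (\<Phi> n) \<le> ennreal (real n * c + real (hlen n) + 2))" by (elim exE)
  then have "\<exists>\<Psi>. \<forall>n. (\<forall>y. prefix_free {\<Phi> n x y | x. True}) \<and>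
      (N2 0 \<le> n \<longrightarrow> err_prob (P n) (\<Phi> n) (\<Psi> n) \<le> \<epsilon> + 1 / real (Suc (mm n)) + (real n * c + 1) / (real n + 1) ^ 2 \<and>
         exp_len (P n) (\<Phi> n) \<le> ennreal (real n * c + real (hlen n) + 2))"
    by (rule choice)
  then obtain \<Psi> where PP: "\<forall>n. (\<forall>y. prefix_free {\<Phi> n x y | x. True}) \<and>
      (N2 0 \<le> n \<longrightarrow> err_prob (P n) (\<Phi> n) (\<Psi> n) \<le> \<epsilon> + 1 / real (Suc (mm n)) + (real n * c + 1) / (real n + 1) ^ 2 \<and>
         exp_len (P n) (\<Phi> n) \<le> ennreal (real n * c + real (hlen n) + 2))" by (elim exE)
  have \<Phi>: "prefix_free {\<Phi> n x y | x. True}" for n y using PP by simp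
  have \<Phi>e: "err_prob (P n) (\<Phi> n) (\<Psi> n) \<le> \<epsilon> + 1 / real (Suc (mm n)) + (real n * c + 1) / (real n + 1) ^ 2"
    if "N2 0 \<le> n" for n using PP that by blast
  have \<Phi>l: "exp_len (P n) (\<Phi> n) \<le> ennreal (real n * c + real (hlen n) + 2)"
    if "N2 0 \<le> n" for n using PP that by blast
  have valid: "\<forall>n. valid_code n (\<Phi> n)"
    unfolding valid_code_def
  proof (intro allI impI)
    fix n and y :: "'b list"
    have "{\<Phi> n x y | x. length x = n} \<subseteq> {\<Phi> n x y | x. True}" by blast
    then show "prefix_free {\<Phi> n x y | x. length x = n}" using \<Phi> prefix_free_subset by blast
  qed
  have errlim: "limsup (\<lambda>n. ennreal (err_prob (P n) (\<Phi> n) (\<Psi> n))) \<le> ennreal \<epsilon>"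
  proof (rule limsup_le_eps)
    fix d :: real assume d: "0 < d"
    obtain m0 where m0: "inverse (real (Suc m0)) < d / 2" using reals_Archimedean[of "d/2"] d by auto
    have t: "(\<lambda>n::nat. (c + 1) * (1 / (real n + 1))) \<longlonglongrightarrow> 0"
      using tendsto_mult_right_zero[OF asym2, of "c + 1"] by simp
    have ev1: "eventually (\<lambda>n. (c + 1) * (1 / (real n + 1)) < d / 2) sequentially"
      using t d by (intro order_tendstoD(2)) auto
    have ev2: "eventually (\<lambda>n. N2 m0 \<le> n) sequentially" by (rule eventually_ge_at_top)
    have "eventually (\<lambda>n. ennreal (err_prob (P n) (\<Phi> n) (\<Psi> n)) \<le> ennreal \<epsilon> + ennreal d) sequentially"
      using ev1 ev2
    proof eventually_elim
      case (elim n)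
      have n0: "N2 0 \<le> n" using N2mono[of 0 m0] elim(2) by simp
      have a: "1 / real (Suc (mm n)) \<le> 1 / real (Suc m0)"
        using mm_ge[OF elim(2)] by (simp add: frac_le)
      have b: "(real n * c + 1) / (real n + 1) ^ 2 \<le> (c + 1) * (1 / (real n + 1))"
      proof -
        have "real n * c + 1 \<le> (c + 1) * (real n + 1)" using c0 by (simp add: algebra_simps)
        then have "(real n * c + 1) / (real n + 1) ^ 2 \<le> (c + 1) * (real n + 1) / (real n + 1) ^ 2"
          by (intro divide_right_mono) auto
        also have "\<dots> = (c + 1) * (1 / (real n + 1))" by (simp add: power2_eq_square)
        finally show ?thesis .
      qed
      have m0': "1 / real (Suc m0) < d / 2" using m0 by (simp add: inverse_eq_divide)
      have "err_prob (P n) (\<Phi> n) (\<Psi> n) \<le> \<epsilon> + d"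
        using \<Phi>e[OF n0] a b elim(1) m0' by linarith
      then have "ennreal (err_prob (P n) (\<Phi> n) (\<Psi> n)) \<le> ennreal (\<epsilon> + d)" by (rule ennreal_leI)
      then show ?case using e0 d by (simp add: ennreal_plus)
    qed
    then show "limsup (\<lambda>n. ennreal (err_prob (P n) (\<Phi> n) (\<Psi> n))) \<le> ennreal \<epsilon> + ennreal d"
      by (rule Limsup_bounded)
  qed
  have ratelim: "limsup (\<lambda>n. ennreal (1 / real n) * exp_len (P n) (\<Phi> n)) \<le> ennreal (l + \<eta>)"
  proof (rule Limsup_bounded)
    have ev1: "eventually (\<lambda>n. (2 * log 2 (real n + 1) + 3) / real n < \<eta> / 2) sequentially"
      using asym1 eta by (intro order_tendstoD(2)) auto
    have ev2: "eventually (\<lambda>n. N2 0 \<le> n) sequentially" by (rule eventually_ge_at_top)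
    show "eventually (\<lambda>n. ennreal (1 / real n) * exp_len (P n) (\<Phi> n) \<le> ennreal (l + \<eta>)) sequentially"
      using ev1 ev2
    proof eventually_elim
      case (elim n)
      have n1: "1 \<le> n" using N2m[of 0] elim(2) by linarith
      have "ennreal (1 / real n) * exp_len (P n) (\<Phi> n) \<le> ennreal (1 / real n) * ennreal (real n * c + real (hlen n) + 2)"
        using \<Phi>l[OF elim(2)] by (rule mult_left_mono) simp
      also have "\<dots> = ennreal (1 / real n * (real n * c + real (hlen n) + 2))"
        using c0 by (subst ennreal_mult[symmetric]) auto
      also have "\<dots> \<le> ennreal (l + \<eta>)"
      proof (rule ennreal_leI)
        have "1 / real n * (real n * c + real (hlen n) + 2) = c + (real (hlen n) + 2) / real n"
          using n1 by (simp add: field_simps)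
        also have "(real (hlen n) + 2) / real n \<le> (2 * log 2 (real n + 1) + 3) / real n"
          using hlen_le[of n] n1 by (intro divide_right_mono) auto
        finally show "1 / real n * (real n * c + real (hlen n) + 2) \<le> l + \<eta>"
          using elim(1) unfolding c_def by linarith
      qed
      finally show ?case .
    qed
  qed
  show ?thesis unfolding achievable_def using valid errlim ratelim by blast
qed

lemma tendsto_at_right_0_ennreal:
  fixes F :: "real \<Rightarrow> ennreal"
  assumes up: "\<And>\<delta>. 0 < \<delta> \<Longrightarrow> \<delta> < b \<Longrightarrow> F \<delta> \<le> R" and b: "0 < b"
    and low: "\<And>a. a < R \<Longrightarrow> \<exists>\<delta>0>0. \<forall>\<delta>. 0 < \<delta> \<longrightarrow> \<delta> < \<delta>0 \<longrightarrow> a < F \<delta>"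
  shows "(F \<longlongrightarrow> R) (at_right 0)"
proof (rule order_tendstoI)
  fix a assume "a < R"
  then obtain \<delta>0 where "\<delta>0 > 0" "\<forall>\<delta>. 0 < \<delta> \<longrightarrow> \<delta> < \<delta>0 \<longrightarrow> a < F \<delta>" using low by blast
  then show "eventually (\<lambda>\<delta>. a < F \<delta>) (at_right 0)"
    unfolding eventually_at_right_field by blast
next
  fix a assume a: "R < a"
  have "\<forall>\<delta>>0. \<delta> < b \<longrightarrow> F \<delta> < a" using up a by (meson le_less_trans)
  then show "eventually (\<lambda>\<delta>. F \<delta> < a) (at_right 0)"
    unfolding eventually_at_right_field using b by blast
qed

theorem theorem5:
  fixes P :: "nat \<Rightarrow> ('a::countable list \<times> 'b::countable list) pmf"
    and \<epsilon> :: real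
  assumes "general_source P"
    and "0 \<le> \<epsilon>" and "\<epsilon> < 1"
  shows "((\<lambda>\<delta>. limsup (\<lambda>n. ennreal (1 / real n) * H_eps (P n) (\<epsilon> + \<delta>)))
            \<longlongrightarrow> R_com P \<epsilon>) (at_right 0) \<and>
         ((\<lambda>\<delta>. limsup (\<lambda>n. ennreal (1 / real n) * Htilde_eps (P n) (\<epsilon> + \<delta>)))
            \<longlongrightarrow> R_com P \<epsilon>) (at_right 0) \<and>
         (\<forall>e. (\<forall>n. sorted_enum (P n) (e n)) \<longrightarrow>
          ((\<lambda>\<delta>. limsup (\<lambda>n. ennreal (1 / real n) * Hhat_eps (P n) (e n) (\<epsilon> + \<delta>)))
            \<longlongrightarrow> R_com P \<epsilon>) (at_right 0))"
proof -
  note gs = assms(1) and e0 = assms(2) and e1 = assms(3)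
  define FH where "FH \<delta> = limsup (\<lambda>n. ennreal (1 / real n) * H_eps (P n) (\<epsilon> + \<delta>))" for \<delta>
  define FT where "FT \<delta> = limsup (\<lambda>n. ennreal (1 / real n) * Htilde_eps (P n) (\<epsilon> + \<delta>))" for \<delta>
  define FC where "FC e \<delta> = limsup (\<lambda>n. ennreal (1 / real n) * Hhat_eps (P n) (e n) (\<epsilon> + \<delta>))" for e \<delta>
  define R where "R = R_com P \<epsilon>"
  define b where "b = 1 - \<epsilon>"
  have b0: "0 < b" using e1 by (simp add: b_def)
  have upT: "FT \<delta> \<le> R" if "0 < \<delta>" "\<delta> < b" for \<delta>
    unfolding R_def R_com_def FT_def
    by (rule Inf_greatest) (use converse_Ht_Hhat(1)[OF gs _ that(1) _ e0] that b_def in auto)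
  have upC: "FC e \<delta> \<le> R" if "0 < \<delta>" "\<delta> < b" "\<forall>n. sorted_enum (P n) (e n)" for e \<delta>
    unfolding R_def R_com_def FC_def
    by (rule Inf_greatest) (use converse_Ht_Hhat(2)[OF gs _ that(1) _ e0 that(3)] that b_def in auto)
  have HT: "FH \<delta> \<le> FT \<delta>" if "\<delta> < b" for \<delta>
    unfolding FH_def FT_def
    by (intro Limsup_mono always_eventually allI mult_left_mono H_le_Ht) (use that b_def in auto)
  have TC: "FT \<delta> \<le> FC e \<delta>" if "0 < \<delta>" "\<forall>n. sorted_enum (P n) (e n)" for e \<delta>
    unfolding FT_def FC_def
    by (intro Limsup_mono always_eventually allI mult_left_mono Ht_le_Hhat') (use that e0 in auto)
  have Hmono: "FH \<delta>' \<le> FH \<delta>" if "\<delta> \<le> \<delta>'" for \<delta> \<delta>'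
    unfolding FH_def
    by (intro Limsup_mono always_eventually allI mult_left_mono H_antimono) (use that in auto)
  have upH: "FH \<delta> \<le> R" if "0 < \<delta>" "\<delta> < b" for \<delta> using HT upT that order_trans by blast
  have lowH: "\<exists>\<delta>0>0. a < FH \<delta>0" if a: "a < R" for a
  proof (rule ccontr)
    assume na: "\<not> (\<exists>\<delta>0>0. a < FH \<delta>0)"
    have all: "FH \<delta> \<le> a" if "0 < \<delta>" for \<delta>
    proof -
      have "\<not> a < FH \<delta>" using na that by blast
      then show ?thesis by (simp add: not_less)
    qed
    have "a \<noteq> top"
    proof
      assume "a = top"
      with a show False by simp
    qed
    then obtain l where l: "a = ennreal l" "0 \<le> l" by (cases a rule: ennreal_cases) auto
    have "R \<le> a"
    proof (rule ennreal_le_epsilon)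
      fix \<eta> :: real assume "0 < \<eta>"
      have H': "limsup (\<lambda>n. ennreal (1 / real n) * H_eps (P n) (\<epsilon> + \<delta>)) \<le> ennreal l" if "0 < \<delta>" for \<delta>
        using all[OF that] l(1) unfolding FH_def by simp
      have "achievable P \<epsilon> (ennreal (l + \<eta>))"
        by (rule achiev_main[OF e0 l(2) \<open>0 < \<eta>\<close> H'])
      then have "R \<le> ennreal (l + \<eta>)" unfolding R_def R_com_def by (rule Inf_lower[OF CollectI])
      then show "R \<le> a + ennreal \<eta>" using l \<open>0 < \<eta>\<close> by (simp add: ennreal_plus)
    qed
    then show False using a by simp
  qed
  have lowH': "\<exists>\<delta>0>0. \<forall>\<delta>. 0 < \<delta> \<longrightarrow> \<delta> < \<delta>0 \<longrightarrow> a < FH \<delta> \<and> \<delta> < b" if a: "a < R" for a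
  proof -
    obtain \<delta>0 where d0: "0 < \<delta>0" "a < FH \<delta>0" using lowH[OF a] by blast
    show ?thesis
    proof (rule exI[of _ "min \<delta>0 b"], intro conjI allI impI)
      show "0 < min \<delta>0 b" using d0 b0 by simp
    next
      fix \<delta> assume "0 < \<delta>" "\<delta> < min \<delta>0 b"
      then show "a < FH \<delta>" using d0 Hmono[of \<delta> \<delta>0] by (meson less_le_trans min.strict_boundedE less_imp_le)
      show "\<delta> < b" using \<open>\<delta> < min \<delta>0 b\<close> by simp
    qed
  qed
  have 1: "(FH \<longlongrightarrow> R) (at_right 0)"
  proof (rule tendsto_at_right_0_ennreal[OF upH b0])
    fix a assume "a < R" then show "\<exists>\<delta>0>0. \<forall>\<delta>. 0 < \<delta> \<longrightarrow> \<delta> < \<delta>0 \<longrightarrow> a < FH \<delta>" using lowH' by blast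
  qed
  have 2: "(FT \<longlongrightarrow> R) (at_right 0)"
  proof (rule tendsto_at_right_0_ennreal[OF upT b0])
    fix a assume "a < R" then show "\<exists>\<delta>0>0. \<forall>\<delta>. 0 < \<delta> \<longrightarrow> \<delta> < \<delta>0 \<longrightarrow> a < FT \<delta>"
      using lowH' HT by (meson less_le_trans)
  qed
  have 3: "(FC e \<longlongrightarrow> R) (at_right 0)" if se: "\<forall>n. sorted_enum (P n) (e n)" for e
  proof (rule tendsto_at_right_0_ennreal[OF upC[OF _ _ se] b0])
    fix a assume "a < R" then show "\<exists>\<delta>0>0. \<forall>\<delta>. 0 < \<delta> \<longrightarrow> \<delta> < \<delta>0 \<longrightarrow> a < FC e \<delta>"
      using lowH' HT TC[OF _ se] by (meson less_le_trans)
  qed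
  show ?thesis using 1 2 3 unfolding FH_def FT_def FC_def R_def by blast
qed

end
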